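(* Every connected simplicial $2$-manifold (possibly with boundary) has a facet cycle, unless it is a checkered polygon triangulation.
   Context: A simplicial $2$-manifold is a finite $2$-dimensional simplicial complex homeomorphic to a $2$-manifold, possibly with boundary; its triangles are called facets. The incidence graph is the bipartite graph whose nodes are the facets and vertices, with an arc $(v,f)$ whenever $v$ is a vertex of $f$. A facet cycle is a closed trail $(v_0,f_1,v_1,\dots,f_k,v_k)$, $v_k=v_0$, in the incidence graph (no arc repeated) that contains every facet node exactly once (vertex nodes may repeat). A polygon triangulation is a simplicial complex homeomorphic to a closed disk with all vertices on the boundary; it is checkered if its triangles can be colored black and white so that triangles sharing an edge receive different colors and every white triangle shares an edge with exactly three triangles (a single triangle is checkered). *)

theory Defs
  imports Main
begin

text \<open>A finite pure 2-dimensional simplicial complex is represented by its set of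
facets F (triangles = 3-element vertex sets); all faces are subsets of facets.\<close>

definition vertices :: "'v set set \<Rightarrow> 'v set" where
  "vertices F = \<Union>F"

definition edges :: "'v set set \<Rightarrow> 'v set set" where
  "edges F = {e. card e = 2 \<and> (\<exists>f\<in>F. e \<subseteq> f)}"

definition link_rel :: "'v set set \<Rightarrow> 'v \<Rightarrow> ('v \<times> 'v) set" where
  "link_rel F v = {(a, b). {v, a, b} \<in> F \<and> a \<noteq> b \<and> a \<noteq> v \<and> b \<noteq> v}"

definition link_vertices :: "'v set set \<Rightarrow> 'v \<Rightarrow> 'v set" where
  "link_vertices F v = {a. a \<noteq> v \<and> (\<exists>f\<in>F. v \<in> f \<and> a \<in> f)}"

text \<open>Combinatorial 2-manifold (possibly with boundary): finitely many triangles,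
every edge in at most two triangles, every vertex link connected (hence a path or a cycle).\<close>
definition simplicial_2_manifold :: "'v set set \<Rightarrow> bool" where
  "simplicial_2_manifold F \<longleftrightarrow>
     finite F \<and> F \<noteq> {} \<and> (\<forall>f\<in>F. card f = 3) \<and>
     (\<forall>e\<in>edges F. card {f\<in>F. e \<subseteq> f} \<le> 2) \<and>
     (\<forall>v\<in>vertices F. \<forall>a\<in>link_vertices F v. \<forall>b\<in>link_vertices F v.
         (a, b) \<in> (link_rel F v)\<^sup>*)"

definition connected_complex :: "'v set set \<Rightarrow> bool" where
  "connected_complex F \<longleftrightarrow>
     (\<forall>f\<in>F. \<forall>g\<in>F. (f, g) \<in> {(f, g). f \<in> F \<and> g \<in> F \<and> f \<inter> g \<noteq> {}}\<^sup>*)"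

text \<open>Facet cycle: closed trail v_0 f_1 v_1 ... f_k v_k = v_0 in the incidence graph,
every facet exactly once, no arc repeated (here fs!i = f_(i+1), vs!i = v_i).\<close>
definition has_facet_cycle :: "'v set set \<Rightarrow> bool" where
  "has_facet_cycle F \<longleftrightarrow>
     (\<exists>fs vs. distinct fs \<and> set fs = F \<and> length vs = Suc (length fs) \<and>
        vs ! 0 = vs ! length fs \<and>
        (\<forall>i<length fs. vs ! i \<in> fs ! i \<and> vs ! Suc i \<in> fs ! i \<and> vs ! i \<noteq> vs ! Suc i))"

definition boundary_edge :: "'v set set \<Rightarrow> 'v set \<Rightarrow> bool" where
  "boundary_edge F e \<longleftrightarrow> e \<in> edges F \<and> card {f\<in>F. e \<subseteq> f} = 1"

text \<open>Polygon triangulation: a combinatorial 2-manifold homeomorphic to a closed disk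
(connected, Euler characteristic 1, nonempty boundary) with all vertices on the boundary.\<close>
definition polygon_triangulation :: "'v set set \<Rightarrow> bool" where
  "polygon_triangulation F \<longleftrightarrow>
     simplicial_2_manifold F \<and> connected_complex F \<and>
     int (card (vertices F)) - int (card (edges F)) + int (card F) = 1 \<and>
     (\<forall>v\<in>vertices F. \<exists>e. boundary_edge F e \<and> v \<in> e)"

definition adjacent_facets :: "'v set set \<Rightarrow> 'v set \<Rightarrow> 'v set \<Rightarrow> bool" where
  "adjacent_facets F f g \<longleftrightarrow> f \<in> F \<and> g \<in> F \<and> f \<noteq> g \<and> card (f \<inter> g) = 2"

definition checkered :: "'v set set \<Rightarrow> bool" where
  "checkered F \<longleftrightarrow>
     (\<exists>black :: 'v set \<Rightarrow> bool.
        (\<forall>f g. adjacent_facets F f g \<longrightarrow> black f \<noteq> black g) \<and>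
        (\<forall>f\<in>F. \<not> black f \<longrightarrow> card {g. adjacent_facets F f g} = 3))"

end

theory Submission
  imports Defs
begin

definition rtree :: "'a set \<Rightarrow> 'a \<Rightarrow> ('a \<Rightarrow> 'a) \<Rightarrow> ('a \<Rightarrow> nat) \<Rightarrow> bool" where
  "rtree X r par h \<longleftrightarrow> finite X \<and> r \<in> X \<and> (\<forall>x\<in>X-{r}. par x \<in> X \<and> h (par x) < h x \<and> h r < h x)"

definition tadj :: "'a \<Rightarrow> ('a \<Rightarrow> 'a) \<Rightarrow> 'a \<Rightarrow> 'a \<Rightarrow> bool" where
  "tadj r par x y \<longleftrightarrow> (x \<noteq> r \<and> par x = y) \<or> (y \<noteq> r \<and> par y = x)"

definition tnb :: "'a set \<Rightarrow> 'a \<Rightarrow> ('a \<Rightarrow> 'a) \<Rightarrow> 'a \<Rightarrow> 'a set" where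
  "tnb X r par x = {y\<in>X. tadj r par x y}"

definition chl :: "'a set \<Rightarrow> 'a \<Rightarrow> ('a \<Rightarrow> 'a) \<Rightarrow> 'a \<Rightarrow> 'a set" where
  "chl X r par p = {x\<in>X-{r}. par x = p}"

definition isblk :: "('a \<Rightarrow> 'a \<Rightarrow> bool) \<Rightarrow> 'a set \<Rightarrow> bool" where
  "isblk R B \<longleftrightarrow> (\<exists>a b. B = {a,b} \<and> a \<noteq> b \<and> R a b) \<or>
     (\<exists>a b c. B = {a,b,c} \<and> a \<noteq> b \<and> b \<noteq> c \<and> a \<noteq> c \<and> R a b \<and> R b c)"

definition wblk :: "('a \<Rightarrow> 'a \<Rightarrow> bool) \<Rightarrow> ('a \<Rightarrow> bool) \<Rightarrow> 'a set \<Rightarrow> bool" where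
  "wblk R col B \<longleftrightarrow> (\<exists>a b c. B = {a,b,c} \<and> a \<noteq> b \<and> b \<noteq> c \<and> a \<noteq> c \<and> R a b \<and> R b c \<and> \<not> col b)"

definition ispart :: "'a set set \<Rightarrow> 'a set \<Rightarrow> bool" where
  "ispart P X \<longleftrightarrow> finite P \<and> \<Union>P = X \<and> (\<forall>B\<in>P. \<forall>C\<in>P. B \<noteq> C \<longrightarrow> B \<inter> C = {})"

definition good :: "('a \<Rightarrow> 'a \<Rightarrow> bool) \<Rightarrow> 'a set \<Rightarrow> bool" where
  "good R X \<longleftrightarrow> (\<exists>P. ispart P X \<and> (\<forall>B\<in>P. isblk R B))"

definition wgood :: "('a \<Rightarrow> 'a \<Rightarrow> bool) \<Rightarrow> ('a \<Rightarrow> bool) \<Rightarrow> 'a set \<Rightarrow> bool" where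
  "wgood R col X \<longleftrightarrow> (\<exists>P. ispart P X \<and> (\<forall>B\<in>P. wblk R col B))"

definition tchk :: "'a set \<Rightarrow> 'a \<Rightarrow> ('a \<Rightarrow> 'a) \<Rightarrow> ('a \<Rightarrow> bool) \<Rightarrow> bool" where
  "tchk X r par col \<longleftrightarrow> (\<forall>x\<in>X. \<forall>y\<in>X. tadj r par x y \<longrightarrow> col x \<noteq> col y) \<and>
      (\<forall>x\<in>X. \<not> col x \<longrightarrow> card (tnb X r par x) = 3)"

lemma ispart_insert:
  assumes "ispart P X" "B \<inter> X = {}" "B \<noteq> {}"
  shows "ispart (insert B P) (B \<union> X)"
proof -
  have "\<forall>C\<in>P. B \<inter> C = {}" using assms unfolding ispart_def by blast
  then show ?thesis using assms unfolding ispart_def by (metis Union_insert insert_iff finite_insert inf_commute)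
qed


lemma good_insert:
  assumes "good R X" "B \<inter> X = {}" "isblk R B"
  shows "good R (B \<union> X)"
proof -
  obtain P where P: "ispart P X" "\<forall>B\<in>P. isblk R B" using assms(1) good_def by blast
  have "B \<noteq> {}" using assms(3) unfolding isblk_def by blast
  then have "ispart (insert B P) (B \<union> X)" using P(1) assms(2) ispart_insert by blast
  then show ?thesis using P(2) assms(3) unfolding good_def by blast
qed

lemma wgood_insert:
  assumes "wgood R col X" "B \<inter> X = {}" "wblk R col B"
  shows "wgood R col (B \<union> X)"
proof -
  obtain P where P: "ispart P X" "\<forall>B\<in>P. wblk R col B" using assms(1) wgood_def by blast
  have "B \<noteq> {}" using assms(3) unfolding wblk_def by blast
  then have "ispart (insert B P) (B \<union> X)" using P(1) assms(2) ispart_insert by blast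
  then show ?thesis using P(2) assms(3) unfolding wgood_def by blast
qed

lemma good_empty: "good R {}"
  unfolding good_def ispart_def by blast

lemma wgood_empty: "wgood R col {}"
  unfolding wgood_def ispart_def by blast

lemma wblk_isblk: "wblk R col B \<Longrightarrow> isblk R B"
  unfolding wblk_def isblk_def by (elim exE conjE) blast

lemma wgood_good: "wgood R col X \<Longrightarrow> good R X"
  unfolding wgood_def good_def using wblk_isblk by metis

lemma isblk_mono: "isblk R B \<Longrightarrow> (\<And>a b. a \<in> B \<Longrightarrow> b \<in> B \<Longrightarrow> R a b \<Longrightarrow> S a b) \<Longrightarrow> isblk S B"
  unfolding isblk_def by (elim disjE exE conjE) blast+

lemma good_mono: "good R X \<Longrightarrow> (\<And>a b. a \<in> X \<Longrightarrow> b \<in> X \<Longrightarrow> R a b \<Longrightarrow> S a b) \<Longrightarrow> good S X"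
proof -
  assume g: "good R X" and m: "\<And>a b. a \<in> X \<Longrightarrow> b \<in> X \<Longrightarrow> R a b \<Longrightarrow> S a b"
  obtain P where P: "ispart P X" "\<forall>B\<in>P. isblk R B" using g good_def by blast
  have "\<forall>B\<in>P. isblk S B"
  proof
    fix B assume "B \<in> P"
    then have "B \<subseteq> X" using P(1) unfolding ispart_def by blast
    then show "isblk S B" using P(2) \<open>B \<in> P\<close> m isblk_mono[of R B S] by blast
  qed
  then show ?thesis using P(1) good_def by blast
qed

lemma tnb_split:
  assumes "rtree X r par h" "x \<in> X"
  shows "tnb X r par x = chl X r par x \<union> (if x = r then {} else {par x})"
proof -
  have "par x \<in> X" if "x \<noteq> r" using assms that unfolding rtree_def by blast
  then show ?thesis unfolding tnb_def chl_def tadj_def by (cases "x = r") (simp_all, blast+)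
qed

lemma tnb_disj:
  assumes "rtree X r par h" "x \<in> X" "x \<noteq> r"
  shows "par x \<notin> chl X r par x"
proof
  assume "par x \<in> chl X r par x"
  then have "par (par x) = x" "par x \<in> X - {r}" unfolding chl_def by auto
  then show False using assms unfolding rtree_def by (metis less_asym DiffI singletonD assms(2,3))
qed

lemma card_tnb:
  assumes "rtree X r par h" "x \<in> X"
  shows "card (tnb X r par x) = card (chl X r par x) + (if x = r then 0 else 1)"
proof -
  have f: "finite (chl X r par x)" using assms unfolding rtree_def chl_def by simp
  show ?thesis
  proof (cases "x = r")
    case True then show ?thesis using tnb_split[OF assms] by simp
  next
    case False
    then show ?thesis using tnb_split[OF assms] tnb_disj[OF assms False] f by simp
  qed
qed


lemma rtree_finite: "rtree X r par h \<Longrightarrow> finite X"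
  unfolding rtree_def by blast

lemma rtree_root: "rtree X r par h \<Longrightarrow> r \<in> X"
  unfolding rtree_def by blast

lemma rtree_par: "rtree X r par h \<Longrightarrow> x \<in> X \<Longrightarrow> x \<noteq> r \<Longrightarrow> par x \<in> X \<and> h (par x) < h x \<and> h r < h x"
  unfolding rtree_def by blast

lemma tnb_diff: "tnb (X - S) r par x = tnb X r par x - S"
  unfolding tnb_def by blast

lemma ex_max_on:
  fixes h :: "'a \<Rightarrow> nat"
  assumes "finite S" "S \<noteq> {}"
  shows "\<exists>p\<in>S. \<forall>q\<in>S. h q \<le> h p"
proof -
  have "Max (h ` S) \<in> h ` S" using assms by simp
  then obtain p where "p \<in> S" "h p = Max (h ` S)" by force
  moreover have "\<forall>q\<in>S. h q \<le> Max (h ` S)" using assms by simp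
  ultimately show ?thesis by metis
qed

lemma pick_nonleaf:
  assumes "rtree X r par h" "X \<noteq> {r}"
  shows "\<exists>p\<in>X. chl X r par p \<noteq> {} \<and> (\<forall>c\<in>chl X r par p. chl X r par c = {}) \<and>
           (p = r \<longrightarrow> X = insert r (chl X r par r))"
proof -
  let ?NL = "{p\<in>X. chl X r par p \<noteq> {}}"
  have fin: "finite X" using rtree_finite[OF assms(1)] .
  obtain x where x: "x \<in> X" "x \<noteq> r" using assms(2) rtree_root[OF assms(1)] by blast
  have px: "par x \<in> X" using rtree_par[OF assms(1) x] by blast
  have "x \<in> chl X r par (par x)" using x unfolding chl_def by blast
  then have ne: "?NL \<noteq> {}" using px by blast
  have finNL: "finite ?NL" using fin by simp
  obtain p where p: "p \<in> ?NL" "\<forall>q\<in>?NL. h q \<le> h p"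
    using ex_max_on[OF finNL ne] by blast
  have leaves: "\<forall>c\<in>chl X r par p. chl X r par c = {}"
  proof
    fix c assume c: "c \<in> chl X r par p"
    then have cX: "c \<in> X" "c \<noteq> r" "par c = p" unfolding chl_def by auto
    show "chl X r par c = {}"
    proof (rule ccontr)
      assume "chl X r par c \<noteq> {}"
      then have "c \<in> ?NL" using cX by blast
      then have "h c \<le> h p" using p by blast
      moreover have "h p < h c" using rtree_par[OF assms(1) cX(1,2)] cX(3) by simp
      ultimately show False by simp
    qed
  qed
  have root: "X = insert r (chl X r par r)" if "p = r"
  proof
    show "insert r (chl X r par r) \<subseteq> X" using rtree_root[OF assms(1)] unfolding chl_def by blast
    show "X \<subseteq> insert r (chl X r par r)"
    proof
      fix y assume y: "y \<in> X"
      show "y \<in> insert r (chl X r par r)"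
      proof (cases "y = r")
        case False
        have py: "par y \<in> X" "h r < h y" using rtree_par[OF assms(1) y False] by auto
        have "y \<in> chl X r par (par y)" using y False unfolding chl_def by blast
        then have "par y \<in> ?NL" using py by blast
        then have "h (par y) \<le> h r" using p that by blast
        then have "par y = r" using rtree_par[OF assms(1) py(1)] by fastforce
        then show ?thesis using y False unfolding chl_def by blast
      qed simp
    qed
  qed
  show ?thesis using p leaves root by blast
qed

lemma rtree_remove:
  assumes "rtree X r par h" "p \<in> X" "p \<noteq> r" "\<forall>c\<in>chl X r par p. chl X r par c = {}"
  shows "rtree (X - insert p (chl X r par p)) r par h"
proof -
  have "r \<notin> insert p (chl X r par p)" using assms(3) unfolding chl_def by blast
  moreover have "par x \<in> X - insert p (chl X r par p)" if x: "x \<in> X - insert p (chl X r par p)" "x \<noteq> r" for x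
  proof -
    have "par x \<in> X" using rtree_par[OF assms(1)] x by blast
    moreover have "par x \<noteq> p" using x unfolding chl_def by blast
    moreover have "par x \<notin> chl X r par p"
    proof
      assume "par x \<in> chl X r par p"
      then have "chl X r par (par x) = {}" using assms(4) by blast
      moreover have "x \<in> chl X r par (par x)" using x unfolding chl_def by blast
      ultimately show False by blast
    qed
    ultimately show ?thesis by blast
  qed
  ultimately show ?thesis using assms(1) unfolding rtree_def by auto
qed

lemma leaf_tnb:
  assumes "rtree X r par h" "c \<in> X" "c \<noteq> r" "chl X r par c = {}"
  shows "tnb X r par c = {par c}"
  using tnb_split[OF assms(1,2)] assms(3,4) by simp

lemma card_chl_le:
  assumes "rtree X r par h" "p \<in> X" "card (tnb X r par p) \<le> 3" "p \<noteq> r"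
  shows "card (chl X r par p) \<le> 2"
  using card_tnb[OF assms(1,2)] assms(3,4) by simp


lemma tadj_sym: "tadj r par x y \<longleftrightarrow> tadj r par y x"
  unfolding tadj_def by blast

lemma tadj_par: "x \<noteq> r \<Longrightarrow> tadj r par x (par x)"
  unfolding tadj_def by blast

lemma tchk_restrict:
  assumes "tchk X r par col" "\<forall>x\<in>X - S. \<not> col x \<longrightarrow> tnb X r par x \<inter> S = {}"
  shows "tchk (X - S) r par col"
proof -
  have "\<forall>x\<in>X - S. \<not> col x \<longrightarrow> tnb (X - S) r par x = tnb X r par x"
    using assms(2) tnb_diff[of X S r par] by blast
  then show ?thesis using assms(1) unfolding tchk_def by auto
qed

lemma RB_step_facts:
  assumes "rtree X r par h" "tchk X r par col" "p \<in> X" "chl X r par p \<noteq> {}"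
    "\<forall>c\<in>chl X r par p. chl X r par c = {}"
  shows "\<forall>c\<in>chl X r par p. col c" "\<not> col p" "card (tnb X r par p) = 3"
proof -
  show bl: "\<forall>c\<in>chl X r par p. col c"
  proof
    fix c assume c: "c \<in> chl X r par p"
    then have cX: "c \<in> X" "c \<noteq> r" unfolding chl_def by auto
    have "tnb X r par c = {par c}" using leaf_tnb[OF assms(1) cX] assms(5) c by blast
    then have "card (tnb X r par c) = 1" by simp
    then show "col c" using assms(2) cX unfolding tchk_def by fastforce
  qed
  obtain c where c: "c \<in> chl X r par p" using assms(4) by blast
  then have "tadj r par c p" "c \<in> X" unfolding chl_def tadj_def by auto
  then have "col c \<noteq> col p" using assms(2,3) unfolding tchk_def by blast
  then show np: "\<not> col p" using bl c by blast
  show "card (tnb X r par p) = 3" using assms(2,3) np unfolding tchk_def by blast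
qed

lemma wblk3:
  assumes "a \<noteq> b" "b \<noteq> c" "a \<noteq> c" "R a b" "R b c" "\<not> col b"
  shows "wblk R col {a,b,c}"
  unfolding wblk_def using assms by blast

lemma RB:
  assumes "rtree X r par h" "tchk X r par col" "u \<in> X" "col u"
  shows "wgood (tadj r par) col (X - {u})"
  using assms
proof (induction "card X" arbitrary: X u rule: less_induct)
  case less
  show ?case
  proof (cases "X = {r}")
    case True then have "X - {u} = {}" using less.prems(3) by blast
    then show ?thesis using wgood_empty by metis
  next
    case False
    obtain p where p: "p \<in> X" "chl X r par p \<noteq> {}" "\<forall>c\<in>chl X r par p. chl X r par c = {}"
      "p = r \<longrightarrow> X = insert r (chl X r par r)"
      using pick_nonleaf[OF less.prems(1) False] by blast
    define C where "C = chl X r par p"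
    have Cp: "\<forall>c\<in>C. c \<in> X \<and> c \<noteq> r \<and> par c = p" unfolding C_def chl_def by blast
    have fs: "\<forall>c\<in>C. col c" "\<not> col p" "card (tnb X r par p) = 3"
      using RB_step_facts[OF less.prems(1,2) p(1,2,3)] unfolding C_def by auto
    have ct: "card (tnb X r par p) = card C + (if p = r then 0 else 1)"
      using card_tnb[OF less.prems(1) p(1)] unfolding C_def by simp
    show ?thesis
    proof (cases "p = r")
      case True
      have X: "X = insert r C" using p(4) True unfolding C_def by simp
      have c3: "card C = 3" using ct fs True by simp
      have ur: "u \<noteq> r" using less.prems(4) fs(2) True by blast
      then have uC: "u \<in> C" using X less.prems(3) by blast
      have "card (C - {u}) = 2" using c3 uC by (simp add: card_Diff_singleton)
      then obtain c1 c2 where cc: "C - {u} = {c1, c2}" "c1 \<noteq> c2" by (meson card_2_iff)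
      have c12: "c1 \<in> C" "c2 \<in> C" using cc by auto
      have eq: "X - {u} = {c1, r, c2} \<union> {}" using X cc ur Cp by auto
      have "wblk (tadj r par) col {c1, r, c2}"
        apply (rule wblk3)
        using Cp c12 cc fs True unfolding tadj_def by auto
      then have "wgood (tadj r par) col ({c1, r, c2} \<union> {})"
        using wgood_insert[OF wgood_empty, of "{c1, r, c2}"] by blast
      then show ?thesis using eq by simp
    next
      case False
      have c2: "card C = 2" using ct fs False by simp
      then obtain c1 c2 where cc: "C = {c1, c2}" "c1 \<noteq> c2" by (meson card_2_iff)
      define q where "q = par p"
      have qX: "q \<in> X" using rtree_par[OF less.prems(1) p(1) False] q_def by blast
      have tpq: "tadj r par p q" using False q_def tadj_par by metis
      have colq: "col q" using less.prems(2) p(1) qX tpq fs(2) unfolding tchk_def by blast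
      define X' where "X' = X - insert p C"
      have rt': "rtree X' r par h" using rtree_remove[OF less.prems(1) p(1) False p(3)]
        unfolding X'_def C_def .
      have fin: "finite X" using rtree_finite[OF less.prems(1)] .
      have "X' \<subset> X" unfolding X'_def using p(1) by blast
      then have lt: "card X' < card X" using fin by (simp add: psubset_card_mono)
      have qC: "q \<notin> C"
      proof
        assume "q \<in> C"
        then have "chl X r par q = {}" using p(3) unfolding C_def by blast
        moreover have "p \<in> chl X r par q" using p(1) False q_def unfolding chl_def by blast
        ultimately show False by blast
      qed
      have qp: "q \<noteq> p" using rtree_par[OF less.prems(1) p(1) False] q_def by auto
      have qX': "q \<in> X'" using qX qC qp unfolding X'_def by blast
      have tch': "tchk X' r par col"
        unfolding X'_def
      proof (rule tchk_restrict[OF less.prems(2)], intro ballI impI)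
        fix x assume x: "x \<in> X - insert p C" "\<not> col x"
        show "tnb X r par x \<inter> insert p C = {}"
        proof (rule ccontr)
          assume "tnb X r par x \<inter> insert p C \<noteq> {}"
          then obtain y where y: "y \<in> insert p C" "tadj r par x y" unfolding tnb_def by blast
          show False
          proof (cases "y = p")
            case True
            then have "(x \<noteq> r \<and> par x = p) \<or> (p \<noteq> r \<and> par p = x)" using y unfolding tadj_def by blast
            then show False
            proof
              assume "x \<noteq> r \<and> par x = p"
              then have "x \<in> C" using x unfolding C_def chl_def by blast
              then show False using x by blast
            next
              assume "p \<noteq> r \<and> par p = x"
              then have "x = q" using q_def by simp
              then show False using colq x by blast
            qed
          next
            case False
            then have yC: "y \<in> C" using y by blast
            have "(x \<noteq> r \<and> par x = y) \<or> (y \<noteq> r \<and> par y = x)" using y unfolding tadj_def by blast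
            then show False
            proof
              assume "x \<noteq> r \<and> par x = y"
              then have "x \<in> chl X r par y" using x unfolding chl_def by blast
              then show False using p(3) yC unfolding C_def by blast
            next
              assume "y \<noteq> r \<and> par y = x"
              then have "x = p" using Cp yC by blast
              then show False using x by blast
            qed
          qed
        qed
      qed
      have dC: "\<forall>c\<in>C. c \<noteq> p" using Cp less.prems(1) rtree_par by fastforce
      show ?thesis
      proof (cases "u \<in> X'")
        case True
        have ih: "wgood (tadj r par) col (X' - {u})"
          using less.hyps[OF lt rt' tch' True less.prems(4)] .
        have eq: "X - {u} = {c1, p, c2} \<union> (X' - {u})" using cc True p(1) Cp unfolding X'_def by auto
        have "wblk (tadj r par) col {c1, p, c2}"
          apply (rule wblk3)
          using Cp cc dC fs unfolding tadj_def by auto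
        moreover have "{c1, p, c2} \<inter> (X' - {u}) = {}" unfolding X'_def using cc by auto
        ultimately have "wgood (tadj r par) col ({c1, p, c2} \<union> (X' - {u}))" by (rule wgood_insert[OF ih, rotated])
        then show ?thesis unfolding eq .
      next
        case False
        have uC: "u \<in> C" using False less.prems(3,4) fs(2) unfolding X'_def by blast
        then obtain c where c: "C - {u} = {c}" "c \<in> C" using cc by auto
        have ih: "wgood (tadj r par) col (X' - {q})"
          using less.hyps[OF lt rt' tch' qX' colq] .
        have eq: "X - {u} = {c, p, q} \<union> (X' - {q})" using c uC qX' p(1) Cp dC unfolding X'_def by auto
        have "wblk (tadj r par) col {c, p, q}"
          apply (rule wblk3)
          using Cp c dC fs qC qp tpq unfolding tadj_def by auto
        moreover have "{c, p, q} \<inter> (X' - {q}) = {}" unfolding X'_def using c by auto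
        ultimately have "wgood (tadj r par) col ({c, p, q} \<union> (X' - {q}))" by (rule wgood_insert[OF ih, rotated])
        then show ?thesis unfolding eq .
      qed
    qed
  qed
qed


lemma nbr_S:
  assumes "rtree X r par h" "p \<in> X" "\<forall>c\<in>chl X r par p. chl X r par c = {}"
    "x \<in> X - insert p (chl X r par p)" "x \<noteq> par p"
  shows "tnb X r par x \<inter> insert p (chl X r par p) = {}"
proof (rule ccontr)
  assume "tnb X r par x \<inter> insert p (chl X r par p) \<noteq> {}"
  then obtain y where y: "y \<in> insert p (chl X r par p)" "tadj r par x y" unfolding tnb_def by blast
  show False
  proof (cases "y = p")
    case True
    then have "(x \<noteq> r \<and> par x = p) \<or> (p \<noteq> r \<and> par p = x)" using y unfolding tadj_def by blast
    then show False
    proof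
      assume "x \<noteq> r \<and> par x = p"
      then have "x \<in> chl X r par p" using assms(4) unfolding chl_def by blast
      then show False using assms(4) by blast
    next
      assume "p \<noteq> r \<and> par p = x"
      then show False using assms(5) by simp
    qed
  next
    case False
    then have yC: "y \<in> chl X r par p" using y by blast
    have "(x \<noteq> r \<and> par x = y) \<or> (y \<noteq> r \<and> par y = x)" using y unfolding tadj_def by blast
    then show False
    proof
      assume "x \<noteq> r \<and> par x = y"
      then have "x \<in> chl X r par y" using assms(4) unfolding chl_def by blast
      then show False using assms(3) yC by blast
    next
      assume "y \<noteq> r \<and> par y = x"
      then have "x = p" using yC unfolding chl_def by blast
      then show False using assms(4) by blast
    qed
  qed
qed

lemma isblk2: "a \<noteq> b \<Longrightarrow> R a b \<Longrightarrow> isblk R {a,b}"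
  unfolding isblk_def by blast

lemma isblk3: "a \<noteq> b \<Longrightarrow> b \<noteq> c \<Longrightarrow> a \<noteq> c \<Longrightarrow> R a b \<Longrightarrow> R b c \<Longrightarrow> isblk R {a,b,c}"
  unfolding isblk_def by blast

lemma good_single: "isblk R B \<Longrightarrow> good R B"
  using good_insert[OF good_empty, of B R] by simp

lemma deg_black:
  assumes "finite X" "\<forall>x\<in>X. card (tnb X r par x) \<le> 3" "X' \<subseteq> X" "p \<in> X - X'" "q \<in> X'"
    "tadj r par q p" "tchk X' r par col"
  shows "col q"
proof (rule ccontr)
  assume "\<not> col q"
  then have c3: "card (tnb X' r par q) = 3" using assms(5,7) unfolding tchk_def by blast
  have s1: "insert p (tnb X' r par q) \<subseteq> tnb X r par q"
    using assms(3,4,6) unfolding tnb_def by blast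
  have s2: "p \<notin> tnb X' r par q" using assms(4) unfolding tnb_def by blast
  have s3: "finite (tnb X r par q)" using assms(1) unfolding tnb_def by simp
  have "finite X'" using assms(1,3) by (rule finite_subset[rotated])
  then have s4: "finite (tnb X' r par q)" unfolding tnb_def by simp
  have A: "card (insert p (tnb X' r par q)) \<le> card (tnb X r par q)" by (rule card_mono[OF s3 s1])
  have B: "card (insert p (tnb X' r par q)) = Suc (card (tnb X' r par q))"
    by (rule card_insert_disjoint[OF s4 s2])
  have "card (tnb X r par q) \<ge> 4" using A B c3 by simp
  moreover have "q \<in> X" using assms(3,5) by blast
  ultimately show False using assms(2) by force
qed

lemma TGL:
  assumes "rtree X r par h" "\<forall>x\<in>X. card (tnb X r par x) \<le> 3"
  shows "good (tadj r par) X \<or> (\<exists>col. tchk X r par col)"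
  using assms
proof (induction "card X" arbitrary: X rule: less_induct)
  case less
  show ?case
  proof (cases "X = {r}")
    case True
    have "tchk X r par (\<lambda>_. True)" using True unfolding tchk_def tadj_def by simp
    then show ?thesis by blast
  next
    case False
    obtain p where p: "p \<in> X" "chl X r par p \<noteq> {}" "\<forall>c\<in>chl X r par p. chl X r par c = {}"
      "p = r \<longrightarrow> X = insert r (chl X r par r)"
      using pick_nonleaf[OF less.prems(1) False] by blast
    define C where "C = chl X r par p"
    have Cp: "\<forall>c\<in>C. c \<in> X \<and> c \<noteq> r \<and> par c = p" unfolding C_def chl_def by blast
    have ct: "card (tnb X r par p) = card C + (if p = r then 0 else 1)"
      using card_tnb[OF less.prems(1) p(1)] unfolding C_def by simp
    have fin: "finite X" using rtree_finite[OF less.prems(1)] .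
    have finC: "finite C" using fin unfolding C_def chl_def by simp
    have Cne: "card C \<noteq> 0" using p(2) finC unfolding C_def by simp
    have dC: "\<forall>c\<in>C. c \<noteq> p" using Cp less.prems(1) rtree_par by fastforce
    show ?thesis
    proof (cases "p = r")
      case True
      have X: "X = insert r C" using p(4) True unfolding C_def by simp
      have "card (tnb X r par p) \<le> 3" using less.prems(2) p(1) by blast
      then have le3: "card C \<le> 3" using ct True by simp
      have tr: "\<forall>c\<in>C. tadj r par r c" using Cp True unfolding tadj_def by blast
      consider "card C = 1" | "card C = 2" | "card C = 3" using le3 Cne by linarith
      then show ?thesis
      proof cases
        case 1
        then obtain c where c: "C = {c}" by (meson card_1_singletonE)
        have "isblk (tadj r par) {r, c}" using isblk2[of r c] tr c dC True by simp
        then show ?thesis using X c good_single by metis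
      next
        case 2
        then obtain c1 c2 where c: "C = {c1, c2}" "c1 \<noteq> c2" by (meson card_2_iff)
        have "isblk (tadj r par) {c1, r, c2}"
          apply (rule isblk3) using tr c dC True tadj_sym[of r par] by (auto)
        moreover have "X = {c1, r, c2}" using X c by auto
        ultimately show ?thesis using good_single by metis
      next
        case 3
        have "tchk X r par (\<lambda>x. x \<noteq> r)"
          unfolding tchk_def
        proof (intro conjI ballI impI)
          fix x y assume xy: "x \<in> X" "y \<in> X" "tadj r par x y"
          then show "(x \<noteq> r) \<noteq> (y \<noteq> r)" using X Cp True unfolding tadj_def by auto
        next
          fix x assume "x \<in> X" "\<not> x \<noteq> r"
          then show "card (tnb X r par x) = 3" using ct 3 True by simp
        qed
        then show ?thesis by blast
      qed
    next
      case False
      have c2: "card C \<le> 2" using card_chl_le[OF less.prems(1) p(1) _ False] less.prems(2) p(1)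
        unfolding C_def by blast
      define q where "q = par p"
      have qX: "q \<in> X" using rtree_par[OF less.prems(1) p(1) False] q_def by blast
      have tpq: "tadj r par p q" using False q_def tadj_par by metis
      define X' where "X' = X - insert p C"
      have rt': "rtree X' r par h" using rtree_remove[OF less.prems(1) p(1) False p(3)]
        unfolding X'_def C_def .
      have "X' \<subset> X" unfolding X'_def using p(1) by blast
      then have lt: "card X' < card X" using fin by (simp add: psubset_card_mono)
      have qC: "q \<notin> C"
      proof
        assume "q \<in> C"
        then have "chl X r par q = {}" using p(3) unfolding C_def by blast
        moreover have "p \<in> chl X r par q" using p(1) False q_def unfolding chl_def by blast
        ultimately show False by blast
      qed
      have qp: "q \<noteq> p" using rtree_par[OF less.prems(1) p(1) False] q_def by auto
      have qX': "q \<in> X'" using qX qC qp unfolding X'_def by blast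
      have deg': "\<forall>x\<in>X'. card (tnb X' r par x) \<le> 3"
      proof
        fix x assume x: "x \<in> X'"
        have "tnb X' r par x \<subseteq> tnb X r par x" unfolding X'_def tnb_def by blast
        moreover have "finite (tnb X r par x)" using fin unfolding tnb_def by simp
        ultimately have "card (tnb X' r par x) \<le> card (tnb X r par x)" by (rule card_mono[rotated])
        then show "card (tnb X' r par x) \<le> 3" using less.prems(2) x unfolding X'_def by force
      qed
      have ih: "good (tadj r par) X' \<or> (\<exists>col. tchk X' r par col)"
        using less.hyps[OF lt rt' deg'] .
      have tcp: "\<forall>c\<in>C. tadj r par c p" using Cp unfolding tadj_def by blast
      have qnb: "q \<in> tnb X r par p" using qX tpq unfolding tnb_def by blast
      have "tnb X r par p = C \<union> {q}" using tnb_split[OF less.prems(1) p(1)] False q_def C_def by simp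
      consider "card C = 1" | "card C = 2" using c2 Cne by linarith
      then show ?thesis
      proof cases
        case 1
        then obtain c where c: "C = {c}" by (meson card_1_singletonE)
        have X: "X = {c, p} \<union> X'" unfolding X'_def using c p(1) Cp by auto
        have bl: "isblk (tadj r par) {c, p}" using isblk2[of c p] tcp c dC by simp
        have dj: "{c, p} \<inter> X' = {}" unfolding X'_def c by blast
        from ih show ?thesis
        proof
          assume "good (tadj r par) X'"
          then show ?thesis using good_insert[OF _ dj bl] X by metis
        next
          assume "\<exists>col. tchk X' r par col"
          then obtain col where col: "tchk X' r par col" by blast
          have colq: "col q"
            using deg_black[OF fin less.prems(2) _ _ qX' _ col] tpq p(1) tadj_sym[of r par p q]
            unfolding X'_def by blast
          have "good (tadj r par) (X' - {q})"
            using wgood_good[OF RB[OF rt' col qX' colq]] .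
          moreover have "isblk (tadj r par) {c, p, q}"
            apply (rule isblk3) using c dC tcp tpq qC qp by auto
          moreover have "{c, p, q} \<inter> (X' - {q}) = {}" unfolding X'_def c by blast
          moreover have "X = {c, p, q} \<union> (X' - {q})" using X qX' by blast
          ultimately show ?thesis using good_insert by metis
        qed
      next
        case 2
        then obtain c1 c2 where c: "C = {c1, c2}" "c1 \<noteq> c2" by (meson card_2_iff)
        have X: "X = {c1, p, c2} \<union> X'" unfolding X'_def using c p(1) Cp by auto
        have bl: "isblk (tadj r par) {c1, p, c2}"
          apply (rule isblk3) using tcp c dC tadj_sym[of r par] by auto
        have dj: "{c1, p, c2} \<inter> X' = {}" unfolding X'_def c by blast
        from ih show ?thesis
        proof
          assume "good (tadj r par) X'"
          then show ?thesis using good_insert[OF _ dj bl] X by metis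
        next
          assume "\<exists>col. tchk X' r par col"
          then obtain col where col: "tchk X' r par col" by blast
          have colq: "col q"
            using deg_black[OF fin less.prems(2) _ _ qX' _ col] tpq p(1) tadj_sym[of r par p q]
            unfolding X'_def by blast
          define col2 where "col2 = (\<lambda>x. if x = p then False else if x \<in> C then True else col x)"
          have pnb: "tnb X r par p = C \<union> {q}" using tnb_split[OF less.prems(1) p(1)] False q_def C_def by simp
          have cnb: "\<forall>c\<in>C. tnb X r par c = {p}"
            using leaf_tnb[OF less.prems(1)] Cp p(3) unfolding C_def by fastforce
          have "tchk X r par col2"
            unfolding tchk_def
          proof (intro conjI ballI impI)
            fix x y assume xy: "x \<in> X" "y \<in> X" "tadj r par x y"
            show "col2 x \<noteq> col2 y"
            proof (cases "x \<in> X' \<and> y \<in> X'")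
              case True
              then have "x \<noteq> p" "x \<notin> C" "y \<noteq> p" "y \<notin> C" unfolding X'_def by auto
              then show ?thesis using col True xy(3) unfolding tchk_def col2_def by simp
            next
              case nn: False
              have "y \<in> tnb X r par x" "x \<in> tnb X r par y" using xy tadj_sym[of r par x y] unfolding tnb_def by auto
              moreover have "x \<in> insert p C \<or> y \<in> insert p C" using nn xy(1,2) unfolding X'_def by blast
              ultimately have "(x = p \<and> y \<in> C \<union> {q}) \<or> (y = p \<and> x \<in> C \<union> {q})"
                using pnb cnb by auto
              then show ?thesis using qC qp colq dC unfolding col2_def by auto
            qed
          next
            fix x assume x: "x \<in> X" "\<not> col2 x"
            show "card (tnb X r par x) = 3"
            proof (cases "x = p")
              case True then show ?thesis using ct c False by simp
            next
              case xp: False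
              have xC: "x \<notin> C" using x(2) xp unfolding col2_def by auto
              then have xX': "x \<in> X'" using x(1) xp unfolding X'_def by blast
              have "\<not> col x" using x(2) xp xC unfolding col2_def by simp
              note xX' = xX' this
              have "x \<noteq> q" using xX' colq by blast
              have "x \<in> X - insert p (chl X r par p)" using xX'(1) unfolding X'_def C_def .
              then have "tnb X r par x \<inter> insert p C = {}"
                using nbr_S[OF less.prems(1) p(1) p(3), of x] \<open>x \<noteq> q\<close> q_def unfolding C_def by simp
              then have "tnb X' r par x = tnb X r par x" unfolding X'_def tnb_diff by (simp add: Diff_triv)
              moreover have "card (tnb X' r par x) = 3" using col xX' unfolding tchk_def by blast
              ultimately show ?thesis by simp
            qed
          qed
          then show ?thesis by blast
        qed
      qed
    qed
  qed
qed

lemma boundary_step: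
  assumes "(x0, x) \<in> R\<^sup>*" "x0 \<in> Y" "x \<notin> Y"
  shows "\<exists>a b. a \<in> Y \<and> b \<notin> Y \<and> (a, b) \<in> R"
proof -
  have "x \<in> Y \<or> (\<exists>a b. a \<in> Y \<and> b \<notin> Y \<and> (a, b) \<in> R)"
    using assms(1)
  proof (induction rule: rtrancl_induct)
    case base then show ?case using assms(2) by blast
  next
    case (step y z)
    then show ?case by blast
  qed
  then show ?thesis using assms(3) by blast
qed

lemma span_ext:
  assumes "finite X" "R \<subseteq> X \<times> X" "\<forall>x\<in>X. (x0, x) \<in> R\<^sup>*"
    "x0 \<in> Y" "Y \<subseteq> X" "rtree Y x0 par h" "\<forall>x\<in>Y-{x0}. (par x, x) \<in> R"
  shows "\<exists>par h. rtree X x0 par h \<and> (\<forall>x\<in>X-{x0}. (par x, x) \<in> R)"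
  using assms(4-)
proof (induction "card (X - Y)" arbitrary: Y par h rule: less_induct)
  case less
  show ?case
  proof (cases "Y = X")
    case True then show ?thesis using less.prems by blast
  next
    case False
    then obtain x where x: "x \<in> X" "x \<notin> Y" using less.prems(2) by blast
    obtain a b where ab: "a \<in> Y" "b \<notin> Y" "(a, b) \<in> R"
      using boundary_step[OF _ less.prems(1) x(2)] assms(3) x(1) by blast
    have bX: "b \<in> X" using ab(3) assms(2) by blast
    define M where "M = Max (h ` Y)"
    have finY: "finite Y" using rtree_finite[OF less.prems(3)] .
    have hM: "\<forall>y\<in>Y. h y \<le> M" unfolding M_def using finY by simp
    define par' where "par' = par(b := a)"
    define h' where "h' = h(b := Suc M)"
    have rt: "rtree (insert b Y) x0 par' h'"
      unfolding rtree_def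
    proof (intro conjI)
      show "finite (insert b Y)" using finY by simp
      show "x0 \<in> insert b Y" using less.prems(1) by blast
      show "\<forall>y\<in>insert b Y - {x0}. par' y \<in> insert b Y \<and> h' (par' y) < h' y \<and> h' x0 < h' y"
      proof
      fix y assume y: "y \<in> insert b Y - {x0}"
      have x0b: "x0 \<noteq> b" using ab(2) less.prems(1) by blast
      show "par' y \<in> insert b Y \<and> h' (par' y) < h' y \<and> h' x0 < h' y"
      proof (cases "y = b")
        case True
        have "a \<noteq> b" using ab by blast
        then show ?thesis using True ab(1) hM less.prems(1) x0b unfolding par'_def h'_def
          by (simp add: le_imp_less_Suc)
      next
        case False
        then have yY: "y \<in> Y" "y \<noteq> x0" using y by auto
        have p: "par y \<in> Y" "h (par y) < h y" "h x0 < h y" using rtree_par[OF less.prems(3) yY] by auto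
        have "par y \<noteq> b" using p(1) ab(2) by blast
        then show ?thesis using p False x0b unfolding par'_def h'_def by simp
      qed
      qed
    qed
    have ed: "\<forall>y\<in>insert b Y - {x0}. (par' y, y) \<in> R"
      using less.prems(4) ab unfolding par'_def by auto
    have lt: "card (X - insert b Y) < card (X - Y)"
    proof (rule psubset_card_mono)
      show "finite (X - Y)" using assms(1) by simp
      show "X - insert b Y \<subset> X - Y" using bX ab(2) by blast
    qed
    show ?thesis
      using less.hyps[OF lt _ _ rt ed] less.prems(1,2) bX by blast
  qed
qed

lemma span_tree:
  assumes "finite X" "x0 \<in> X" "R \<subseteq> X \<times> X" "\<forall>x\<in>X. (x0, x) \<in> R\<^sup>*"
  shows "\<exists>par h. rtree X x0 par h \<and> (\<forall>x\<in>X-{x0}. (par x, x) \<in> R)"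
proof -
  have "rtree {x0} x0 id (\<lambda>_. 0)" unfolding rtree_def by simp
  then show ?thesis using span_ext[OF assms(1,3,4), of "{x0}" id "\<lambda>_. 0"] assms(2) by blast
qed


lemma ispart_remove:
  assumes "ispart P X" "B \<in> P"
  shows "ispart (P - {B}) (X - B)"
proof -
  have "\<forall>C\<in>P - {B}. C \<inter> B = {}" using assms unfolding ispart_def by blast
  have U: "\<Union>P = X" using assms(1) unfolding ispart_def by blast
  have "\<Union>(P - {B}) = X - B"
  proof
    show "\<Union>(P - {B}) \<subseteq> X - B" using U \<open>\<forall>C\<in>P - {B}. C \<inter> B = {}\<close> by blast
    show "X - B \<subseteq> \<Union>(P - {B})"
    proof
      fix x assume "x \<in> X - B"
      then obtain C where "C \<in> P" "x \<in> C" "x \<notin> B" using U by blast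
      then show "x \<in> \<Union>(P - {B})" by blast
    qed
  qed
  moreover have "finite (P - {B})" using assms(1) unfolding ispart_def by simp
  moreover have "\<forall>C\<in>P - {B}. \<forall>D\<in>P - {B}. C \<noteq> D \<longrightarrow> C \<inter> D = {}"
    using assms(1) unfolding ispart_def by blast
  ultimately show ?thesis unfolding ispart_def by blast
qed

lemma GL:
  assumes fin: "finite X" and ne: "X \<noteq> {}"
    and sym: "\<And>x y. adj x y \<Longrightarrow> adj y x"
    and irr: "\<And>x. \<not> adj x x"
    and inX: "\<And>x y. adj x y \<Longrightarrow> x \<in> X"
    and conn: "\<forall>x\<in>X. \<forall>y\<in>X. (x, y) \<in> {(a, b). adj a b}\<^sup>*"
    and deg: "\<forall>x\<in>X. card {y. adj x y} \<le> 3"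
  shows "good adj X \<or> (\<exists>r par h col. rtree X r par h \<and> (\<forall>x\<in>X. \<forall>y\<in>X. adj x y \<longleftrightarrow> tadj r par x y)
            \<and> tchk X r par col)"
proof -
  obtain x0 where x0: "x0 \<in> X" using ne by blast
  have RX: "{(a, b). adj a b} \<subseteq> X \<times> X" using inX sym by blast
  obtain par h where t: "rtree X x0 par h" "\<forall>x\<in>X-{x0}. (par x, x) \<in> {(a, b). adj a b}"
    using span_tree[OF fin x0 RX] conn x0 by blast
  have ta: "adj x y" if "tadj x0 par x y" "x \<in> X" "y \<in> X" for x y
    using that t(2) sym unfolding tadj_def by blast
  have sub: "tnb X x0 par x \<subseteq> {y. adj x y}" if "x \<in> X" for x
    using ta that unfolding tnb_def by blast
  have finA: "finite {y. adj x y}" for x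
  proof -
    have "{y. adj x y} \<subseteq> X" using inX sym by blast
    then show ?thesis using fin finite_subset by blast
  qed
  have tdeg: "\<forall>x\<in>X. card (tnb X x0 par x) \<le> 3"
  proof
    fix x assume "x \<in> X"
    then have "card (tnb X x0 par x) \<le> card {y. adj x y}" using sub finA card_mono by metis
    then show "card (tnb X x0 par x) \<le> 3" using deg \<open>x \<in> X\<close> by force
  qed
  from TGL[OF t(1) tdeg] show ?thesis
  proof
    assume "good (tadj x0 par) X"
    then have "good adj X" by (rule good_mono) (use ta in blast)
    then show ?thesis by blast
  next
    assume "\<exists>col. tchk X x0 par col"
    then obtain col where col: "tchk X x0 par col" by blast
    show ?thesis
    proof (cases "\<forall>x\<in>X. \<forall>y\<in>X. adj x y \<longleftrightarrow> tadj x0 par x y")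
      case True then show ?thesis using t(1) col by blast
    next
      case False
      then obtain x y where xy: "x \<in> X" "y \<in> X" "adj x y" "\<not> tadj x0 par x y"
        using ta by blast
      have wh: "tnb X x0 par z = {y. adj z y}" if "z \<in> X" "\<not> col z" for z
      proof -
        have "card (tnb X x0 par z) = 3" using col that unfolding tchk_def by blast
        moreover have "card {y. adj z y} \<le> 3" using deg that by blast
        ultimately show ?thesis using sub[OF that(1)] finA card_subset_eq by (metis le_antisym card_mono)
      qed
      have cx: "col x"
      proof (rule ccontr)
        assume "\<not> col x"
        then have "y \<in> tnb X x0 par x" using wh xy by blast
        then show False using xy(4) unfolding tnb_def by blast
      qed
      have cy: "col y"
      proof (rule ccontr)
        assume "\<not> col y"
        then have "x \<in> tnb X x0 par y" using wh xy sym by blast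
        then show False using xy(4) tadj_sym[of x0 par x y] unfolding tnb_def by blast
      qed
      have xny: "x \<noteq> y" using xy(3) irr by blast
      obtain P where P: "ispart P (X - {x})" "\<forall>B\<in>P. wblk (tadj x0 par) col B"
        using RB[OF t(1) col xy(1) cx] unfolding wgood_def by blast
      have "y \<in> \<Union>P" using P(1) xy(2) xny unfolding ispart_def by blast
      then obtain B where B: "B \<in> P" "y \<in> B" by blast
      have "wblk (tadj x0 par) col B" using P(2) B(1) by blast
      then obtain a b c where abc0: "B = {a,b,c} \<and> a \<noteq> b \<and> b \<noteq> c \<and> a \<noteq> c \<and> tadj x0 par a b \<and>
        tadj x0 par b c \<and> \<not> col b"
        unfolding wblk_def by (elim exE) (rule that)
      note abc = conjunct1[OF abc0] conjunct1[OF conjunct2[OF abc0]]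
        conjunct1[OF conjunct2[OF conjunct2[OF abc0]]]
        conjunct1[OF conjunct2[OF conjunct2[OF conjunct2[OF abc0]]]]
        conjunct1[OF conjunct2[OF conjunct2[OF conjunct2[OF conjunct2[OF abc0]]]]]
        conjunct1[OF conjunct2[OF conjunct2[OF conjunct2[OF conjunct2[OF conjunct2[OF abc0]]]]]]
        conjunct2[OF conjunct2[OF conjunct2[OF conjunct2[OF conjunct2[OF conjunct2[OF abc0]]]]]]
      have "\<Union>P = X - {x}" using P(1) unfolding ispart_def by blast
      then have BX: "B \<subseteq> X - {x}" using B(1) by blast
      have yb: "y \<noteq> b" using cy abc(7) by blast
      obtain z where z: "B - {y} = {b, z}" "adj b z" "b \<noteq> z"
      proof (cases "y = a")
        case True
        then have "B - {y} = {b, c}" using abc by auto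
        moreover have "adj b c" using ta abc BX by blast
        ultimately show ?thesis using that abc by blast
      next
        case False
        then have "y = c" using B(2) abc yb by blast
        then have "B - {y} = {b, a}" using abc by auto
        moreover have "adj b a" using ta abc BX sym by blast
        ultimately show ?thesis using that abc by blast
      qed
      have g0: "good adj (X - {x} - B)"
      proof -
        have "\<forall>C\<in>P - {B}. isblk adj C"
        proof
          fix C assume C: "C \<in> P - {B}"
          then have "wblk (tadj x0 par) col C" "C \<subseteq> X" using P unfolding ispart_def by auto
          then show "isblk adj C" using wblk_isblk isblk_mono ta by (metis subsetD)
        qed
        then show ?thesis using ispart_remove[OF P(1) B(1)] unfolding good_def by blast
      qed
      have g1: "good adj ({b, z} \<union> (X - {x} - B))"
        by (rule good_insert[OF g0]) (use z in \<open>auto intro: isblk2\<close>)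
      have g2: "good adj ({x, y} \<union> ({b, z} \<union> (X - {x} - B)))"
        by (rule good_insert[OF g1]) (use z B BX xny xy(3) in \<open>auto intro: isblk2\<close>)
      have "{x, y} \<union> ({b, z} \<union> (X - {x} - B)) = X"
        using z B BX xy(1) by auto
      then show ?thesis using g2 by simp
    qed
  qed
qed

fun otr :: "'v \<Rightarrow> ('v set \<times> 'v) list \<Rightarrow> 'v \<Rightarrow> bool" where
  "otr u [] w \<longleftrightarrow> u = w"
| "otr u ((f, x) # xs) w \<longleftrightarrow> u \<in> f \<and> x \<in> f \<and> u \<noteq> x \<and> otr x xs w"

definition ctr :: "'v set set \<Rightarrow> 'v \<Rightarrow> bool" where
  "ctr S z \<longleftrightarrow> (\<exists>xs. otr z xs z \<and> xs \<noteq> [] \<and> distinct (map fst xs) \<and> set (map fst xs) = S)"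

definition crep :: "'v set set \<Rightarrow> 'v \<Rightarrow> 'v set \<Rightarrow> 'v \<Rightarrow> bool" where
  "crep S y t x \<longleftrightarrow> (\<exists>rest. otr y ((t, x) # rest) y \<and> distinct (map fst ((t, x) # rest))
      \<and> set (map fst ((t, x) # rest)) = S)"

lemma otr_append: "otr u (xs @ ys) w \<longleftrightarrow> (\<exists>m. otr u xs m \<and> otr m ys w)"
  by (induction xs arbitrary: u) auto

fun revt :: "'v \<Rightarrow> ('v set \<times> 'v) list \<Rightarrow> ('v set \<times> 'v) list" where
  "revt u [] = []"
| "revt u ((f, x) # xs) = revt x xs @ [(f, u)]"

lemma otr_revt: "otr u xs w \<Longrightarrow> otr w (revt u xs) u"
  by (induction u xs w rule: otr.induct) (auto simp: otr_append)

lemma map_fst_revt: "map fst (revt u xs) = rev (map fst xs)"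
  by (induction u xs rule: revt.induct) auto

lemma ctr_rotate:
  assumes "otr z (xs @ ys) z" "otr z xs m" "xs @ ys \<noteq> []" "distinct (map fst (xs @ ys))"
  shows "otr m (ys @ xs) m \<and> ys @ xs \<noteq> [] \<and> distinct (map fst (ys @ xs)) \<and>
         set (map fst (ys @ xs)) = set (map fst (xs @ ys))"
proof -
  obtain m' where "otr z xs m'" "otr m' ys z" using assms(1) otr_append by metis
  moreover have "m' = m" using assms(2) calculation(1)
    by (induction xs arbitrary: z) auto
  ultimately have "otr m (ys @ xs) m" using otr_append assms(2) by metis
  then show ?thesis using assms(3,4) by auto
qed

lemma ctr_crep:
  assumes "ctr S z" "t \<in> S"
  shows "\<exists>y x. crep S y t x"
proof -
  obtain xs where xs: "otr z xs z" "xs \<noteq> []" "distinct (map fst xs)" "set (map fst xs) = S"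
    using assms(1) unfolding ctr_def by blast
  obtain i where i: "i < length xs" "fst (xs ! i) = t" using assms(2) xs(4)
    by (metis in_set_conv_nth length_map nth_map)
  obtain as bs where ab: "xs = as @ bs" "bs = drop i xs" "as = take i xs" by simp
  then have bsne: "bs \<noteq> []" using i by simp
  obtain x rest where bs: "bs = (t, x) # rest" using i ab
    by (metis Cons_nth_drop_Suc prod.collapse)
  obtain m where m: "otr z as m" "otr m bs z" using xs(1) ab(1) otr_append by metis
  have r: "otr m (bs @ as) m \<and> bs @ as \<noteq> [] \<and> distinct (map fst (bs @ as)) \<and>
         set (map fst (bs @ as)) = set (map fst (as @ bs))"
    using ctr_rotate[of z as bs m] xs m ab(1) by blast
  then show ?thesis unfolding crep_def using bs xs(4) ab(1) by (metis append_Cons)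
qed

lemma crep_ctr:
  assumes "crep S y t x"
  shows "ctr S y" "ctr S x" "y \<in> t" "x \<in> t" "y \<noteq> x"
proof -
  obtain rest where r: "otr y ((t, x) # rest) y" "distinct (map fst ((t, x) # rest))"
      "set (map fst ((t, x) # rest)) = S" using assms unfolding crep_def by blast
  show "ctr S y" unfolding ctr_def using r by blast
  show "y \<in> t" "x \<in> t" "y \<noteq> x" using r(1) by auto
  have "otr y ([(t, x)] @ rest) y" using r(1) by simp
  moreover have "otr y [(t, x)] x" using r(1) by simp
  ultimately have "otr x (rest @ [(t, x)]) x \<and> rest @ [(t, x)] \<noteq> [] \<and> distinct (map fst (rest @ [(t, x)])) \<and>
         set (map fst (rest @ [(t, x)])) = set (map fst ([(t, x)] @ rest))"
    using ctr_rotate[of y "[(t, x)]" rest x] r(2) by simp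
  moreover have "set (map fst ([(t, x)] @ rest)) = S" using r(3) by simp
  ultimately show "ctr S x" unfolding ctr_def by metis
qed

lemma crep_rev:
  assumes "crep S y t x"
  shows "crep S x t y"
proof -
  obtain rest where r: "otr y ((t, x) # rest) y" "distinct (map fst ((t, x) # rest))"
      "set (map fst ((t, x) # rest)) = S" using assms unfolding crep_def by blast
  have o: "otr x rest y" "y \<in> t" "x \<in> t" "y \<noteq> x" using r(1) by auto
  have "otr y (revt x rest) x" using otr_revt[OF o(1)] .
  then have "otr x ((t, y) # revt x rest) x" using o by simp
  moreover have "distinct (map fst ((t, y) # revt x rest))" using r(2) by (simp add: map_fst_revt)
  moreover have "set (map fst ((t, y) # revt x rest)) = S" using r(3) by (simp add: map_fst_revt)
  ultimately show ?thesis unfolding crep_def by blast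
qed

lemma ctr_merge_common:
  assumes "ctr S1 z" "ctr S2 z" "S1 \<inter> S2 = {}"
  shows "ctr (S1 \<union> S2) z"
proof -
  obtain xs where xs: "otr z xs z" "xs \<noteq> []" "distinct (map fst xs)" "set (map fst xs) = S1"
    using assms(1) unfolding ctr_def by blast
  obtain ys where ys: "otr z ys z" "ys \<noteq> []" "distinct (map fst ys)" "set (map fst ys) = S2"
    using assms(2) unfolding ctr_def by blast
  have "otr z (xs @ ys) z" using xs(1) ys(1) otr_append by metis
  moreover have "distinct (map fst (xs @ ys))" using xs(3,4) ys(3,4) assms(3) by simp
  moreover have "set (map fst (xs @ ys)) = S1 \<union> S2" using xs(4) ys(4) by simp
  moreover have "xs @ ys \<noteq> []" using xs(2) by simp
  ultimately show ?thesis unfolding ctr_def by blast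
qed

lemma ctr_exchange:
  assumes "crep S1 y t x" "crep S2 y' t' x'" "S1 \<inter> S2 = {}"
    "y \<in> t'" "y \<noteq> x'" "y' \<in> t" "y' \<noteq> x"
  shows "ctr (S1 \<union> S2) y"
proof -
  obtain r1 where r1: "otr y ((t, x) # r1) y" "distinct (map fst ((t, x) # r1))"
      "set (map fst ((t, x) # r1)) = S1" using assms(1) unfolding crep_def by blast
  obtain r2 where r2: "otr y' ((t', x') # r2) y'" "distinct (map fst ((t', x') # r2))"
      "set (map fst ((t', x') # r2)) = S2" using assms(2) unfolding crep_def by blast
  have o1: "otr x r1 y" "x \<in> t" using r1(1) by auto
  have o2: "otr x' r2 y'" "x' \<in> t'" using r2(1) by auto
  have "otr y' ((t, x) # r1) y" using o1 assms(6,7) by simp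
  then have "otr x' (r2 @ (t, x) # r1) y" using o2(1) otr_append by metis
  then have "otr y ((t', x') # r2 @ (t, x) # r1) y" using assms(4,5) o2(2) by simp
  moreover have "distinct (map fst ((t', x') # r2 @ (t, x) # r1))"
    using r1(2,3) r2(2,3) assms(3) by auto
  moreover have "set (map fst ((t', x') # r2 @ (t, x) # r1)) = S1 \<union> S2"
    using r1(3) r2(3) by auto
  ultimately show ?thesis unfolding ctr_def by blast
qed

lemma two_of_three:
  assumes "card t = 3" "card (t \<inter> t') = 2" "x \<in> t" "y \<in> t" "x \<noteq> y"
  shows "x \<in> t' \<or> y \<in> t'"
proof (rule ccontr)
  assume "\<not> (x \<in> t' \<or> y \<in> t')"
  then have "t \<inter> t' \<subseteq> t - {x, y}" by blast
  moreover have "finite t" using assms(1) card.infinite by fastforce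
  moreover have "card (t - {x, y}) = 1" using assms by (simp add: card_Diff_subset)
  ultimately have "card (t \<inter> t') \<le> 1" by (metis card_mono finite_Diff)
  then show False using assms(2) by simp
qed

lemma ctr_merge:
  assumes "ctr S1 z1" "ctr S2 z2" "S1 \<inter> S2 = {}" "t \<in> S1" "t' \<in> S2"
    "card t = 3" "card t' = 3" "card (t \<inter> t') = 2"
  shows "\<exists>z. ctr (S1 \<union> S2) z"
proof -
  obtain y x where c1: "crep S1 y t x" using ctr_crep[OF assms(1,4)] by blast
  obtain y' x' where c2: "crep S2 y' t' x'" using ctr_crep[OF assms(2,5)] by blast
  note i1 = crep_ctr[OF c1] and i2 = crep_ctr[OF c2]
  show ?thesis
  proof (cases "{y, x} \<inter> {y', x'} = {}")
    case False
    then obtain w where w: "w \<in> {y, x}" "w \<in> {y', x'}" by blast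
    have "ctr S1 w" using w(1) i1 by blast
    moreover have "ctr S2 w" using w(2) i2 by blast
    ultimately have "ctr (S1 \<union> S2) w" by (rule ctr_merge_common[OF _ _ assms(3)])
    then show ?thesis by blast
  next
    case True
    have "y \<in> t' \<or> x \<in> t'" using two_of_three[OF assms(6,8)] i1 by blast
    then obtain e1 o1 where e1: "crep S1 e1 t o1" "e1 \<in> t'" "e1 \<in> {y, x}" "o1 \<in> {y, x}"
    proof
      assume "y \<in> t'" then show ?thesis using that c1 by blast
    next
      assume "x \<in> t'" then show ?thesis using that crep_rev[OF c1] by blast
    qed
    have "t' \<inter> t = t \<inter> t'" by blast
    then have "y' \<in> t \<or> x' \<in> t" using two_of_three[OF assms(7)] assms(8) i2 by metis
    then obtain e2 o2 where e2: "crep S2 e2 t' o2" "e2 \<in> t" "e2 \<in> {y', x'}" "o2 \<in> {y', x'}"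
    proof
      assume "y' \<in> t" then show ?thesis using that c2 by blast
    next
      assume "x' \<in> t" then show ?thesis using that crep_rev[OF c2] by blast
    qed
    have "e1 \<noteq> o2" using True e1(3) e2(4) by blast
    have "e2 \<noteq> o1" using True e1(4) e2(3) by blast
    note \<open>e1 \<noteq> o2\<close> this
    then have "ctr (S1 \<union> S2) e1"
      using ctr_exchange[OF e1(1) e2(1) assms(3) e1(2) _ e2(2)] by blast
    then show ?thesis by blast
  qed
qed

lemma otr_nth:
  "otr u xs w \<Longrightarrow> (\<forall>i<length xs. (u # map snd xs) ! i \<in> fst (xs ! i) \<and> map snd xs ! i \<in> fst (xs ! i)
      \<and> (u # map snd xs) ! i \<noteq> map snd xs ! i) \<and> (u # map snd xs) ! length xs = w"
proof (induction xs arbitrary: u)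
  case Nil then show ?case by simp
next
  case (Cons p xs)
  obtain f x where p: "p = (f, x)" by fastforce
  have h: "u \<in> f" "x \<in> f" "u \<noteq> x" "otr x xs w" using Cons.prems p by auto
  note ih = Cons.IH[OF h(4)]
  have A: "\<forall>i<length (p # xs). (u # map snd (p # xs)) ! i \<in> fst ((p # xs) ! i) \<and> map snd (p # xs) ! i \<in> fst ((p # xs) ! i)
      \<and> (u # map snd (p # xs)) ! i \<noteq> map snd (p # xs) ! i"
  proof (intro allI impI)
    fix i assume i: "i < length (p # xs)"
    show "(u # map snd (p # xs)) ! i \<in> fst ((p # xs) ! i) \<and> map snd (p # xs) ! i \<in> fst ((p # xs) ! i)
      \<and> (u # map snd (p # xs)) ! i \<noteq> map snd (p # xs) ! i"
    proof (cases i)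
      case 0 then show ?thesis using h p by simp
    next
      case (Suc j)
      then have "j < length xs" using i by simp
      then show ?thesis using ih Suc p by simp
    qed
  qed
  have "(u # map snd (p # xs)) ! length (p # xs) = w" using ih p by simp
  then show ?case using A by blast
qed

lemma ctr_hfc:
  assumes "ctr F z"
  shows "has_facet_cycle F"
proof -
  obtain xs where xs: "otr z xs z" "xs \<noteq> []" "distinct (map fst xs)" "set (map fst xs) = F"
    using assms unfolding ctr_def by blast
  note o = otr_nth[OF xs(1)]
  define fs where "fs = map fst xs"
  define vs where "vs = z # map snd xs"
  have "length vs = Suc (length fs)" unfolding vs_def fs_def by simp
  moreover have "vs ! 0 = vs ! length fs" using o unfolding vs_def fs_def by simp
  moreover have "\<forall>i<length fs. vs ! i \<in> fs ! i \<and> vs ! Suc i \<in> fs ! i \<and> vs ! i \<noteq> vs ! Suc i"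
    using o unfolding vs_def fs_def by simp
  ultimately show ?thesis unfolding has_facet_cycle_def using xs(3,4) fs_def by blast
qed

lemma ctr_ne: "ctr B z \<Longrightarrow> B \<noteq> {}"
  unfolding ctr_def by auto

lemma ctr_pair:
  assumes "s \<noteq> t" "card (s \<inter> t) = 2"
  shows "\<exists>z. ctr {s, t} z"
proof -
  obtain a b where ab: "s \<inter> t = {a, b}" "a \<noteq> b" using assms(2) by (meson card_2_iff)
  have "otr a [(s, b), (t, a)] a" using ab by auto
  moreover have "distinct (map fst [(s, b), (t, a)])" using assms(1) by simp
  moreover have "set (map fst [(s, b), (t, a)]) = {s, t}" by simp
  ultimately show ?thesis unfolding ctr_def by blast
qed

lemma two_edges_share:
  assumes "card s = 3" "e1 \<subseteq> s" "e2 \<subseteq> s" "card e1 = 2" "card e2 = 2" "e1 \<noteq> e2"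
  shows "\<exists>w a c. w \<in> e1 \<and> w \<in> e2 \<and> a \<in> e1 \<and> a \<notin> e2 \<and> c \<in> e2 \<and> c \<notin> e1"
proof -
  have fs: "finite s" using assms(1) card.infinite by fastforce
  have a: "\<exists>a. a \<in> e1 \<and> a \<notin> e2"
  proof (rule ccontr)
    assume "\<not> ?thesis"
    then have "e1 \<subseteq> e2" by blast
    moreover have "finite e2" using assms(3) fs finite_subset by blast
    ultimately have "e1 = e2" using assms(4,5) card_subset_eq by metis
    then show False using assms(6) by blast
  qed
  have c: "\<exists>c. c \<in> e2 \<and> c \<notin> e1"
  proof (rule ccontr)
    assume "\<not> ?thesis"
    then have "e2 \<subseteq> e1" by blast
    moreover have "finite e1" using assms(2) fs finite_subset by blast
    ultimately have "e1 = e2" using assms(4,5) card_subset_eq by metis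
    then show False using assms(6) by blast
  qed
  have w: "e1 \<inter> e2 \<noteq> {}"
  proof
    assume d: "e1 \<inter> e2 = {}"
    have "finite e1" "finite e2" using assms(2,3) fs finite_subset by blast+
    then have "card (e1 \<union> e2) = 4" using d assms(4,5) by (simp add: card_Un_disjoint)
    moreover have "card (e1 \<union> e2) \<le> 3" using assms(1,2,3) fs by (metis Un_least card_mono)
    ultimately show False by simp
  qed
  show ?thesis using a c w by blast
qed

lemma ctr_path3:
  assumes "s1 \<noteq> s2" "s2 \<noteq> s3" "s1 \<noteq> s3" "card (s1 \<inter> s2) = 2" "card (s2 \<inter> s3) = 2"
    "s1 \<inter> s2 \<noteq> s2 \<inter> s3" "card s2 = 3"
  shows "\<exists>z. ctr {s1, s2, s3} z"
proof -
  obtain w a c where wac: "w \<in> s1 \<inter> s2" "w \<in> s2 \<inter> s3" "a \<in> s1 \<inter> s2" "a \<notin> s2 \<inter> s3"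
      "c \<in> s2 \<inter> s3" "c \<notin> s1 \<inter> s2"
    using two_edges_share[OF assms(7) _ _ assms(4,5,6)] by blast
  have "otr w [(s1, a), (s2, c), (s3, w)] w" using wac by auto
  moreover have "distinct (map fst [(s1, a), (s2, c), (s3, w)])" using assms(1,2,3) by simp
  moreover have "set (map fst [(s1, a), (s2, c), (s3, w)]) = {s1, s2, s3}" by simp
  ultimately have "ctr {s1, s2, s3} w" unfolding ctr_def
    by (intro exI[of _ "[(s1, a), (s2, c), (s3, w)]"]) simp
  then show ?thesis by blast
qed

lemma blocks_merge:
  assumes "finite P" "\<forall>B\<in>P. \<forall>C\<in>P. B \<noteq> C \<longrightarrow> B \<inter> C = {}" "\<forall>B\<in>P. \<exists>z. ctr B z" "\<Union>P = F" "F \<noteq> {}"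
    "\<forall>f\<in>F. card f = 3" "\<forall>f\<in>F. \<forall>g\<in>F. (f, g) \<in> {(a, b). adjacent_facets F a b}\<^sup>*"
  shows "\<exists>z. ctr F z"
  using assms(1-5)
proof (induction "card P" arbitrary: P rule: less_induct)
  case less
  show ?case
  proof (cases "card P \<le> 1")
    case True
    then consider "card P = 0" | "card P = 1" by linarith
    then consider "P = {}" | "\<exists>B. P = {B}"
    proof cases
      case 1 then show ?thesis using that less.prems(1) by simp
    next
      case 2 then show ?thesis using that by (meson card_1_singletonE)
    qed
    then show ?thesis
    proof cases
      case 1 then show ?thesis using less.prems(4,5) by simp
    next
      case 2 then obtain B where "P = {B}" by blast
      then show ?thesis using less.prems(3,4) by simp
    qed
  next
    case False
    then obtain B1 B2' where B: "B1 \<in> P" "B2' \<in> P" "B1 \<noteq> B2'"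
      using card_le_Suc0_iff_eq[OF less.prems(1)] by auto
    obtain z1 where z1: "ctr B1 z1" using less.prems(3) B(1) by blast
    obtain z2' where z2': "ctr B2' z2'" using less.prems(3) B(2) by blast
    obtain f where f: "f \<in> B1" using ctr_ne[OF z1] by blast
    obtain g where g: "g \<in> B2'" using ctr_ne[OF z2'] by blast
    have gB1: "g \<notin> B1" using less.prems(2) B g by blast
    have fg: "f \<in> F" "g \<in> F" using less.prems(4) B f g by blast+
    have "(f, g) \<in> {(a, b). adjacent_facets F a b}\<^sup>*" using assms(7) fg by blast
    then obtain a b where ab: "a \<in> B1" "b \<notin> B1" "adjacent_facets F a b"
      using boundary_step[of f g _ B1] f gB1 by blast
    have bF: "b \<in> F" "a \<in> F" using ab(3) unfolding adjacent_facets_def by auto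
    then obtain B2 where B2: "B2 \<in> P" "b \<in> B2" using less.prems(4) by blast
    have B12: "B1 \<noteq> B2" using ab(2) B2(2) by blast
    obtain z2 where z2: "ctr B2 z2" using less.prems(3) B2(1) by blast
    have dj: "B1 \<inter> B2 = {}" using less.prems(2) B(1) B2(1) B12 by blast
    have c3: "card a = 3" "card b = 3" using assms(6) bF by auto
    have c2: "card (a \<inter> b) = 2" using ab(3) unfolding adjacent_facets_def by blast
    obtain z where z: "ctr (B1 \<union> B2) z" using ctr_merge[OF z1 z2 dj ab(1) B2(2) c3 c2] by blast
    define P' where "P' = insert (B1 \<union> B2) (P - {B1, B2})"
    have cP: "card (P - {B1, B2}) = card P - 2" using B(1) B2(1) B12 less.prems(1)
      by (simp add: card_Diff_subset)
    have "B1 \<union> B2 \<notin> P - {B1, B2}"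
    proof
      assume "B1 \<union> B2 \<in> P - {B1, B2}"
      then have "B1 \<union> B2 \<in> P" "B1 \<union> B2 \<noteq> B1" by auto
      then have "(B1 \<union> B2) \<inter> B1 = {}" using less.prems(2) B(1) by metis
      then show False using f by blast
    qed
    then have "card P' = card P - 1" unfolding P'_def using cP less.prems(1) False by simp
    then have lt: "card P' < card P" using False by simp
    have p1: "finite P'" unfolding P'_def using less.prems(1) by simp
    have p2: "\<forall>B\<in>P'. \<forall>C\<in>P'. B \<noteq> C \<longrightarrow> B \<inter> C = {}"
      unfolding P'_def using less.prems(2) B(1) B2(1) by blast
    have p3: "\<forall>B\<in>P'. \<exists>z. ctr B z" unfolding P'_def using less.prems(3) z by blast
    have p4: "\<Union>P' = F" unfolding P'_def using less.prems(4) B(1) B2(1) by blast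
    show ?thesis using less.hyps[OF lt p1 p2 p3 p4 less.prems(5)] .
  qed
qed

lemma dc:
  assumes "finite A" "finite B"
  shows "(\<Sum>x\<in>A. card {y\<in>B. R x y}) = (\<Sum>y\<in>B. card {x\<in>A. R x y})"
  unfolding card_eq_sum[of "{y\<in>B. R _ y}"] card_eq_sum[of "{x\<in>A. R x _}"]
  by (rule sum.swap_restrict[OF assms])

lemma man_fin: "simplicial_2_manifold F \<Longrightarrow> finite F"
  unfolding simplicial_2_manifold_def by blast
lemma man_card: "simplicial_2_manifold F \<Longrightarrow> f \<in> F \<Longrightarrow> card f = 3"
  unfolding simplicial_2_manifold_def by blast
lemma man_edge: "simplicial_2_manifold F \<Longrightarrow> e \<in> edges F \<Longrightarrow> card {f\<in>F. e \<subseteq> f} \<le> 2"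
  unfolding simplicial_2_manifold_def by blast
lemma man_link: "simplicial_2_manifold F \<Longrightarrow> v \<in> vertices F \<Longrightarrow> a \<in> link_vertices F v \<Longrightarrow>
   b \<in> link_vertices F v \<Longrightarrow> (a, b) \<in> (link_rel F v)\<^sup>*"
  unfolding simplicial_2_manifold_def by blast

lemma card3_fin: "card f = 3 \<Longrightarrow> finite f"
  using card.infinite by fastforce

lemma inter_le2:
  assumes "card f = 3" "card g = 3" "f \<noteq> g"
  shows "card (f \<inter> g) \<le> 2"
proof -
  have ff: "finite f" "finite g" using assms card3_fin by auto
  have "f \<inter> g \<noteq> f"
  proof
    assume "f \<inter> g = f"
    then have "f \<subseteq> g" by blast
    then have "f = g" using card_subset_eq ff assms by metis
    then show False using assms(3) by blast
  qed
  then have "f \<inter> g \<subset> f" by blast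
  then have "card (f \<inter> g) < card f" using ff psubset_card_mono by blast
  then show ?thesis using assms by simp
qed

lemma same_edge:
  assumes "card f = 3" "card g = 3" "v \<in> f" "v \<in> g" "a \<in> f" "a \<in> g" "v \<noteq> a" "f \<in> F" "g \<in> F"
  shows "f = g \<or> adjacent_facets F f g"
proof (cases "f = g")
  case False
  have "{v, a} \<subseteq> f \<inter> g" using assms by blast
  moreover have "finite (f \<inter> g)" using card3_fin assms(1) by blast
  ultimately have "card {v, a} \<le> card (f \<inter> g)" using card_mono by blast
  then have "2 \<le> card (f \<inter> g)" using assms(7) by simp
  then have "card (f \<inter> g) = 2" using inter_le2[OF assms(1,2) False] by simp
  then show ?thesis unfolding adjacent_facets_def using assms False by blast
qed simp

lemma link_path:
  assumes man: "simplicial_2_manifold F"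
    and ac: "(a, c) \<in> (link_rel F v)\<^sup>*"
    and g: "g \<in> F" "v \<in> g" "c \<in> g" "c \<noteq> v"
  shows "\<forall>f. f \<in> F \<and> v \<in> f \<and> a \<in> f \<and> a \<noteq> v \<longrightarrow> (f, g) \<in> {(x, y). adjacent_facets F x y}\<^sup>*"
  using ac
proof (induction rule: converse_rtrancl_induct)
  case base
  show ?case
  proof (intro allI impI)
    fix f assume f: "f \<in> F \<and> v \<in> f \<and> c \<in> f \<and> c \<noteq> v"
    have "f = g \<or> adjacent_facets F f g"
      using same_edge[of f g v c F] man_card[OF man] f g by blast
    then show "(f, g) \<in> {(x, y). adjacent_facets F x y}\<^sup>*" by auto
  qed
next
  case (step a a')
  show ?case
  proof (intro allI impI)
    fix f assume f: "f \<in> F \<and> v \<in> f \<and> a \<in> f \<and> a \<noteq> v"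
    have t: "{v, a, a'} \<in> F" "a' \<noteq> v" using step(1) unfolding link_rel_def by auto
    have "(insert v (insert a {a'}), g) \<in> {(x, y). adjacent_facets F x y}\<^sup>*"
      using step(3) t by blast
    moreover have "f = {v, a, a'} \<or> adjacent_facets F f {v, a, a'}"
      using same_edge[of f "{v, a, a'}" v a F] man_card[OF man] f t by blast
    ultimately show "(f, g) \<in> {(x, y). adjacent_facets F x y}\<^sup>*"
      by (metis (no_types, lifting) case_prodI converse_rtrancl_into_rtrancl mem_Collect_eq)
  qed
qed

lemma other_vertex:
  assumes "card f = 3" "v \<in> f"
  shows "\<exists>a\<in>f. a \<noteq> v"
proof -
  have "card (f - {v}) = 2" using assms by simp
  then show ?thesis by (metis Diff_iff card_2_iff insertI1 singletonD)
qed

lemma dual_conn: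
  assumes man: "simplicial_2_manifold F" and con: "connected_complex F"
  shows "\<forall>f\<in>F. \<forall>g\<in>F. (f, g) \<in> {(x, y). adjacent_facets F x y}\<^sup>*"
proof -
  let ?A = "{(x, y). adjacent_facets F x y}"
  let ?R = "{(f, g). f \<in> F \<and> g \<in> F \<and> f \<inter> g \<noteq> {}}"
  have "?R \<subseteq> ?A\<^sup>*"
  proof
    fix p assume "p \<in> ?R"
    then obtain f g v where fg: "p = (f, g)" "f \<in> F" "g \<in> F" "v \<in> f" "v \<in> g" by blast
    obtain a where a: "a \<in> f" "a \<noteq> v" using other_vertex[OF man_card[OF man fg(2)] fg(4)] by blast
    obtain c where c: "c \<in> g" "c \<noteq> v" using other_vertex[OF man_card[OF man fg(3)] fg(5)] by blast
    have vV: "v \<in> vertices F" unfolding vertices_def using fg by blast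
    have aL: "a \<in> link_vertices F v" unfolding link_vertices_def using a fg by blast
    have cL: "c \<in> link_vertices F v" unfolding link_vertices_def using c fg by blast
    have "(a, c) \<in> (link_rel F v)\<^sup>*" using man_link[OF man vV aL cL] .
    then have "\<forall>f'. f' \<in> F \<and> v \<in> f' \<and> a \<in> f' \<and> a \<noteq> v \<longrightarrow> (f', g) \<in> ?A\<^sup>*"
      by (rule link_path[OF man _ fg(3) fg(5) c])
    then have "(f, g) \<in> ?A\<^sup>*" using a fg by blast
    then show "p \<in> ?A\<^sup>*" using fg by simp
  qed
  then have "?R\<^sup>* \<subseteq> ?A\<^sup>*" by (rule rtrancl_subset_rtrancl)
  moreover have "\<forall>f\<in>F. \<forall>g\<in>F. (f, g) \<in> ?R\<^sup>*" using con unfolding connected_complex_def by blast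
  ultimately show ?thesis by blast
qed

lemma edge_in_edges:
  assumes "card e = 2" "e \<subseteq> f" "f \<in> F"
  shows "e \<in> edges F"
  unfolding edges_def using assms by blast

lemma dual_deg:
  assumes man: "simplicial_2_manifold F" and f: "f \<in> F"
  shows "card {g. adjacent_facets F f g} \<le> 3"
proof -
  have c3: "card f = 3" using man_card[OF man f] .
  have ff: "finite f" using card3_fin[OF c3] .
  have inj: "inj_on (\<lambda>g. f \<inter> g) {g. adjacent_facets F f g}"
  proof (rule inj_onI)
    fix g g' assume g: "g \<in> {g. adjacent_facets F f g}" "g' \<in> {g. adjacent_facets F f g}"
      and eq: "f \<inter> g = f \<inter> g'"
    show "g = g'"
    proof (rule ccontr)
      assume ne: "g \<noteq> g'"
      let ?e = "f \<inter> g"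
      have ge: "card ?e = 2" "g \<in> F" "g' \<in> F" "f \<noteq> g" "f \<noteq> g'" using g unfolding adjacent_facets_def by auto
      have "?e \<in> edges F" using edge_in_edges[OF ge(1) _ f] by blast
      then have le: "card {h\<in>F. ?e \<subseteq> h} \<le> 2" using man_edge[OF man] by blast
      have "{f, g, g'} \<subseteq> {h\<in>F. ?e \<subseteq> h}" using eq f ge by blast
      moreover have "finite {h\<in>F. ?e \<subseteq> h}" using man_fin[OF man] by simp
      ultimately have "card {f, g, g'} \<le> 2" using le card_mono by (metis le_trans)
      then show False using ne ge by (simp add: card_insert_if)
    qed
  qed
  have "(\<lambda>g. f \<inter> g) ` {g. adjacent_facets F f g} \<subseteq> {B. B \<subseteq> f \<and> card B = 2}"
    unfolding adjacent_facets_def by blast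
  moreover have "card {B. B \<subseteq> f \<and> card B = 2} = 3" using n_subsets[OF ff, of 2] c3 by (simp add: choose_two)
  moreover have "finite {B. B \<subseteq> f \<and> card B = 2}" using ff by simp
  ultimately have "card ((\<lambda>g. f \<inter> g) ` {g. adjacent_facets F f g}) \<le> 3"
    using card_mono[of "{B. B \<subseteq> f \<and> card B = 2}" "(\<lambda>g. f \<inter> g) ` {g. adjacent_facets F f g}"] by linarith
  then show ?thesis using card_image[OF inj] by simp
qed

lemma isblk_ctr:
  assumes man: "simplicial_2_manifold F" and b: "isblk (adjacent_facets F) B"
  shows "\<exists>z. ctr B z"
  using b unfolding isblk_def
proof (elim disjE exE conjE)
  fix a b assume B: "B = {a, b}" "a \<noteq> b" "adjacent_facets F a b"
  then have "card (a \<inter> b) = 2" unfolding adjacent_facets_def by blast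
  then have "\<exists>z. ctr {a, b} z" using ctr_pair[OF B(2)] by blast
  then show ?thesis using B(1) by simp
next
  fix a b c assume B: "B = {a, b, c}" "a \<noteq> b" "b \<noteq> c" "a \<noteq> c"
    "adjacent_facets F a b" "adjacent_facets F b c"
  have ab: "card (a \<inter> b) = 2" "a \<in> F" "b \<in> F" using B(5) unfolding adjacent_facets_def by auto
  have bc: "card (b \<inter> c) = 2" "c \<in> F" using B(6) unfolding adjacent_facets_def by auto
  have ne: "a \<inter> b \<noteq> b \<inter> c"
  proof
    assume eq: "a \<inter> b = b \<inter> c"
    let ?e = "a \<inter> b"
    have "?e \<in> edges F" using edge_in_edges[OF ab(1) _ ab(2)] by blast
    then have le: "card {h\<in>F. ?e \<subseteq> h} \<le> 2" using man_edge[OF man] by blast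
    have "{a, b, c} \<subseteq> {h\<in>F. ?e \<subseteq> h}" using eq ab bc by blast
    moreover have "finite {h\<in>F. ?e \<subseteq> h}" using man_fin[OF man] by simp
    ultimately have "card {a, b, c} \<le> 2" using le card_mono by (metis le_trans)
    then show False using B by (simp add: card_insert_if)
  qed
  show ?thesis using ctr_path3[OF B(2,3,4) ab(1) bc(1) ne man_card[OF man ab(3)]] B(1) by simp
qed

lemma good_fc:
  assumes man: "simplicial_2_manifold F" and dcon: "\<forall>f\<in>F. \<forall>g\<in>F. (f, g) \<in> {(x, y). adjacent_facets F x y}\<^sup>*"
    and g: "good (adjacent_facets F) F"
  shows "has_facet_cycle F"
proof -
  obtain P where P: "ispart P F" "\<forall>B\<in>P. isblk (adjacent_facets F) B" using g unfolding good_def by blast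
  have "\<forall>B\<in>P. \<exists>z. ctr B z" using P(2) isblk_ctr[OF man] by blast
  moreover have "F \<noteq> {}" using man unfolding simplicial_2_manifold_def by blast
  ultimately obtain z where "ctr F z"
    using blocks_merge[of P F] P(1) dcon man_card[OF man] unfolding ispart_def by blast
  then show ?thesis by (rule ctr_hfc)
qed

lemma card_filter_sum: "finite A \<Longrightarrow> card {x\<in>A. P x} = (\<Sum>x\<in>A. if P x then 1 else (0::nat))"
  using sum.inter_filter[of A "\<lambda>x. (1::nat)" P] by (simp add: card_eq_sum[symmetric])

lemma fin_edges: "finite F \<Longrightarrow> (\<forall>f\<in>F. finite f) \<Longrightarrow> finite (edges F)"
proof -
  assume a: "finite F" "\<forall>f\<in>F. finite f"
  have "edges F \<subseteq> Pow (\<Union>F)" unfolding edges_def by blast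
  moreover have "finite (Pow (\<Union>F))" using a by simp
  ultimately show ?thesis by (rule finite_subset)
qed

lemma man_fin_edges: "simplicial_2_manifold F \<Longrightarrow> finite (edges F)"
  using fin_edges man_fin man_card card3_fin by metis

lemma man_fin_V: "simplicial_2_manifold F \<Longrightarrow> finite (vertices F)"
  unfolding vertices_def using man_fin man_card card3_fin by (metis finite_Union)

lemma m_bounds:
  assumes man: "simplicial_2_manifold F" and e: "e \<in> edges F"
  shows "1 \<le> card {f\<in>F. e \<subseteq> f}" "card {f\<in>F. e \<subseteq> f} \<le> 2"
proof -
  obtain f where "f \<in> F" "e \<subseteq> f" using e unfolding edges_def by blast
  then have "{f\<in>F. e \<subseteq> f} \<noteq> {}" by blast
  moreover have "finite {f\<in>F. e \<subseteq> f}" using man_fin[OF man] by simp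
  ultimately show "1 \<le> card {f\<in>F. e \<subseteq> f}" by (simp add: Suc_leI card_gt_0_iff)
  show "card {f\<in>F. e \<subseteq> f} \<le> 2" using man_edge[OF man e] .
qed

lemma sum_m:
  assumes man: "simplicial_2_manifold F"
  shows "(\<Sum>e\<in>edges F. card {f\<in>F. e \<subseteq> f}) = 3 * card F"
proof -
  have "(\<Sum>e\<in>edges F. card {f\<in>F. e \<subseteq> f}) = (\<Sum>f\<in>F. card {e\<in>edges F. e \<subseteq> f})"
    by (rule dc[OF man_fin_edges[OF man] man_fin[OF man]])
  also have "\<dots> = (\<Sum>f\<in>F. 3)"
  proof (rule sum.cong[OF refl])
    fix f assume f: "f \<in> F"
    have "{e\<in>edges F. e \<subseteq> f} = {B. B \<subseteq> f \<and> card B = 2}" unfolding edges_def using f by blast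
    moreover have "card {B. B \<subseteq> f \<and> card B = 2} = 3"
      using n_subsets[OF card3_fin[OF man_card[OF man f]], of 2] man_card[OF man f] by (simp add: choose_two)
    ultimately show "card {e\<in>edges F. e \<subseteq> f} = 3" by simp
  qed
  finally show ?thesis by simp
qed

lemma sum_m2:
  assumes man: "simplicial_2_manifold F"
  shows "(\<Sum>e\<in>edges F. card {f\<in>F. e \<subseteq> f}) =
     card (edges F) + card {e\<in>edges F. card {f\<in>F. e \<subseteq> f} = 2}"
proof -
  have fe: "finite (edges F)" using man_fin_edges[OF man] .
  have "(\<Sum>e\<in>edges F. card {f\<in>F. e \<subseteq> f}) =
      (\<Sum>e\<in>edges F. 1 + (if card {f\<in>F. e \<subseteq> f} = 2 then 1 else 0))"
  proof (rule sum.cong[OF refl])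
    fix e assume "e \<in> edges F"
    then show "card {f\<in>F. e \<subseteq> f} = 1 + (if card {f\<in>F. e \<subseteq> f} = 2 then 1 else 0)"
      using m_bounds[OF man] by fastforce
  qed
  also have "\<dots> = (\<Sum>e\<in>edges F. 1) + (\<Sum>e\<in>edges F. if card {f\<in>F. e \<subseteq> f} = 2 then 1 else 0)"
    by (rule sum.distrib)
  also have "\<dots> = card (edges F) + card {e\<in>edges F. card {f\<in>F. e \<subseteq> f} = 2}"
    using card_filter_sum[OF fe, of "\<lambda>e. card {f\<in>F. e \<subseteq> f} = 2"] by simp
  finally show ?thesis .
qed

lemma sum_T:
  assumes man: "simplicial_2_manifold F"
  shows "(\<Sum>v\<in>vertices F. card {f\<in>F. v \<in> f}) = 3 * card F"
proof -
  have "(\<Sum>v\<in>vertices F. card {f\<in>F. v \<in> f}) = (\<Sum>f\<in>F. card {v\<in>vertices F. v \<in> f})"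
    by (rule dc[OF man_fin_V[OF man] man_fin[OF man]])
  also have "\<dots> = (\<Sum>f\<in>F. 3)"
  proof (rule sum.cong[OF refl])
    fix f assume f: "f \<in> F"
    have "{v\<in>vertices F. v \<in> f} = f" unfolding vertices_def using f by blast
    then show "card {v\<in>vertices F. v \<in> f} = 3" using man_card[OF man f] by simp
  qed
  finally show ?thesis by simp
qed

lemma card_link:
  assumes man: "simplicial_2_manifold F"
  shows "card (link_vertices F v) = card {e\<in>edges F. v \<in> e}"
proof -
  have inj: "inj_on (\<lambda>a. {v, a}) (link_vertices F v)"
    unfolding inj_on_def link_vertices_def by (metis doubleton_eq_iff)
  have "(\<lambda>a. {v, a}) ` (link_vertices F v) = {e\<in>edges F. v \<in> e}"
  proof
    show "(\<lambda>a. {v, a}) ` link_vertices F v \<subseteq> {e \<in> edges F. v \<in> e}"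
    proof
      fix e assume "e \<in> (\<lambda>a. {v, a}) ` link_vertices F v"
      then obtain a f where "e = {v, a}" "a \<noteq> v" "f \<in> F" "v \<in> f" "a \<in> f"
        unfolding link_vertices_def by blast
      then show "e \<in> {e \<in> edges F. v \<in> e}" unfolding edges_def by auto
    qed
    show "{e \<in> edges F. v \<in> e} \<subseteq> (\<lambda>a. {v, a}) ` link_vertices F v"
    proof
      fix e assume e: "e \<in> {e \<in> edges F. v \<in> e}"
      then obtain f where f: "card e = 2" "f \<in> F" "e \<subseteq> f" "v \<in> e" unfolding edges_def by blast
      have "card (e - {v}) = 1" using f by simp
      then obtain a where a: "e - {v} = {a}" by (meson card_1_singletonE)
      then have "e = {v, a}" "a \<noteq> v" using f(4) by auto
      moreover have "a \<in> link_vertices F v" unfolding link_vertices_def using a f by blast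
      ultimately show "e \<in> (\<lambda>a. {v, a}) ` link_vertices F v" by blast
    qed
  qed
  then show ?thesis using card_image[OF inj] by simp
qed

lemma sum_L:
  assumes man: "simplicial_2_manifold F"
  shows "(\<Sum>v\<in>vertices F. card (link_vertices F v)) = 2 * card (edges F)"
proof -
  have "(\<Sum>v\<in>vertices F. card (link_vertices F v)) = (\<Sum>v\<in>vertices F. card {e\<in>edges F. v \<in> e})"
    using card_link[OF man] by simp
  also have "\<dots> = (\<Sum>e\<in>edges F. card {v\<in>vertices F. v \<in> e})"
    by (rule dc[OF man_fin_V[OF man] man_fin_edges[OF man]])
  also have "\<dots> = (\<Sum>e\<in>edges F. 2)"
  proof (rule sum.cong[OF refl])
    fix e assume e: "e \<in> edges F"
    then have "{v\<in>vertices F. v \<in> e} = e" "card e = 2" unfolding vertices_def edges_def by auto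
    then show "card {v\<in>vertices F. v \<in> e} = 2" by simp
  qed
  finally show ?thesis by simp
qed

lemma I_card:
  assumes man: "simplicial_2_manifold F" and rt: "rtree F r par h"
    and adjeq: "\<forall>f\<in>F. \<forall>g\<in>F. adjacent_facets F f g \<longleftrightarrow> tadj r par f g"
  shows "card {e\<in>edges F. card {f\<in>F. e \<subseteq> f} = 2} = card F - 1"
proof -
  let ?I = "{e\<in>edges F. card {f\<in>F. e \<subseteq> f} = 2}"
  let ?S = "\<lambda>e. {f\<in>F. e \<subseteq> f}"
  have finF: "finite F" using man_fin[OF man] .
  have pa: "par x \<in> F \<and> adjacent_facets F x (par x)" if x: "x \<in> F - {r}" for x
  proof -
    have xx: "x \<in> F" "x \<noteq> r" using x by auto
    have p: "par x \<in> F" using rtree_par[OF rt xx] by simp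
    have "tadj r par x (par x)" using tadj_par[OF xx(2)] .
    then show ?thesis using adjeq xx p by simp
  qed
  have Sfin: "finite (?S e)" for e using finF by simp
  have img: "(\<lambda>x. x \<inter> par x) ` (F - {r}) = ?I"
  proof
    show "(\<lambda>x. x \<inter> par x) ` (F - {r}) \<subseteq> ?I"
    proof
      fix e assume "e \<in> (\<lambda>x. x \<inter> par x) ` (F - {r})"
      then obtain x where x: "x \<in> F - {r}" "e = x \<inter> par x" by blast
      have p: "par x \<in> F" "card (x \<inter> par x) = 2" "x \<noteq> par x"
        using pa[OF x(1)] unfolding adjacent_facets_def by auto
      have eE: "e \<in> edges F" using edge_in_edges[of e x F] x p by blast
      have xF: "x \<in> F" using x(1) by blast
      have "{x, par x} \<subseteq> ?S e" unfolding x(2) using xF p(1) by blast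
      then have "card {x, par x} \<le> card (?S e)" using Sfin[of e] card_mono by blast
      then have "2 \<le> card (?S e)" using p(3) by simp
      moreover have "card (?S e) \<le> 2" using man_edge[OF man eE] .
      ultimately show "e \<in> ?I" using eE by simp
    qed
    show "?I \<subseteq> (\<lambda>x. x \<inter> par x) ` (F - {r})"
    proof
      fix e assume e: "e \<in> ?I"
      then have "card (?S e) = 2" by blast
      then obtain a b where ab: "?S e = {a, b}" "a \<noteq> b" by (meson card_2_iff)
      have abF: "a \<in> F" "b \<in> F" "e \<subseteq> a" "e \<subseteq> b" using ab(1) by blast+
      have ce: "card e = 2" using e unfolding edges_def by blast
      have fe: "finite e" using ce card.infinite by fastforce
      have ca: "card a = 3" "card b = 3" using man_card[OF man] abF by auto
      have "e \<subseteq> a \<inter> b" using abF by blast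
      moreover have "finite (a \<inter> b)" using card3_fin[OF ca(1)] by blast
      ultimately have "2 \<le> card (a \<inter> b)" using ce card_mono by metis
      then have cab: "card (a \<inter> b) = 2" using inter_le2[OF ca ab(2)] by simp
      then have "adjacent_facets F a b" unfolding adjacent_facets_def using abF ab(2) by blast
      then have "tadj r par a b" using adjeq abF by blast
      then have "(a \<noteq> r \<and> par a = b) \<or> (b \<noteq> r \<and> par b = a)" unfolding tadj_def .
      then show "e \<in> (\<lambda>x. x \<inter> par x) ` (F - {r})"
      proof
        assume h: "a \<noteq> r \<and> par a = b"
        have "e = a \<inter> b" using card_subset_eq[OF \<open>finite (a \<inter> b)\<close> \<open>e \<subseteq> a \<inter> b\<close>] ce cab by simp
        then show ?thesis using h abF by blast
      next
        assume h: "b \<noteq> r \<and> par b = a"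
        have "e = a \<inter> b" using card_subset_eq[OF \<open>finite (a \<inter> b)\<close> \<open>e \<subseteq> a \<inter> b\<close>] ce cab by simp
        then have "e = b \<inter> par b" using h by blast
        then show ?thesis using h abF by blast
      qed
    qed
  qed
  have inj: "inj_on (\<lambda>x. x \<inter> par x) (F - {r})"
  proof (rule inj_onI, rule ccontr)
    fix x y assume x: "x \<in> F - {r}" and y: "y \<in> F - {r}" and eq: "x \<inter> par x = y \<inter> par y" and ne: "x \<noteq> y"
    let ?e = "x \<inter> par x"
    have px: "par x \<in> F" "card ?e = 2" "x \<noteq> par x" using pa[OF x] unfolding adjacent_facets_def by auto
    have py: "par y \<in> F" "y \<noteq> par y" using pa[OF y] unfolding adjacent_facets_def by auto
    have eE: "?e \<in> edges F" using edge_in_edges[of ?e x F] x px by blast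
    have le: "card (?S ?e) \<le> 2" using man_edge[OF man eE] .
    have mem: "x \<in> ?S ?e" "par x \<in> ?S ?e" "y \<in> ?S ?e" "par y \<in> ?S ?e" using x y px py eq by blast+
    have three: "False" if "u \<in> ?S ?e" "w \<in> ?S ?e" "z \<in> ?S ?e" "u \<noteq> w" "w \<noteq> z" "u \<noteq> z" for u w z
    proof -
      have "{u, w, z} \<subseteq> ?S ?e" using that by blast
      then have "card {u, w, z} \<le> 2" using le Sfin card_mono by (metis le_trans)
      then show False using that by (simp add: card_insert_if)
    qed
    have y1: "y = par x" using three[OF mem(1,2,3)] px(3) ne by blast
    have y2: "par y = x"
    proof (rule ccontr)
      assume "par y \<noteq> x"
      moreover have "par y \<noteq> par x" using y1 py(2) by simp
      ultimately show False using three[OF mem(1,2,4)] px(3) by blast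
    qed
    have "h (par x) < h x" "h (par y) < h y" using rtree_par[OF rt, of x] rtree_par[OF rt, of y] x y by auto
    then show False using y1 y2 by simp
  qed
  have "card ?I = card (F - {r})" using card_image[OF inj] img by simp
  then show ?thesis using rtree_root[OF rt] finF by simp
qed

lemma V_le:
  assumes "rtree X r par h" "\<forall>x\<in>X. card x = 3" "\<forall>x\<in>X-{r}. card (x \<inter> par x) = 2"
  shows "card (\<Union>X) \<le> card X + 2"
  using assms
proof (induction "card X" arbitrary: X rule: less_induct)
  case less
  have finX: "finite X" using rtree_finite[OF less.prems(1)] .
  have rX: "r \<in> X" using rtree_root[OF less.prems(1)] .
  show ?case
  proof (cases "X = {r}")
    case True then show ?thesis using less.prems(2) by simp
  next
    case False
    then have ne: "X - {r} \<noteq> {}" using rX by blast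
    obtain x where x: "x \<in> X - {r}" "\<forall>y\<in>X - {r}. h y \<le> h x"
      using ex_max_on[of "X - {r}" h] finX ne by blast
    have nochild: "\<forall>y\<in>X - {r}. par y \<noteq> x"
    proof (intro ballI notI)
      fix y assume "y \<in> X - {r}" "par y = x"
      then have "h x < h y" "h y \<le> h x" using rtree_par[OF less.prems(1)] x by auto
      then show False by simp
    qed
    define X' where "X' = X - {x}"
    have rt': "rtree X' r par h"
      unfolding rtree_def X'_def
    proof (intro conjI ballI)
      show "finite (X - {x})" using finX by simp
      show "r \<in> X - {x}" using rX x by blast
    next
      fix y assume y: "y \<in> X - {x} - {r}"
      then show "par y \<in> X - {x}" using rtree_par[OF less.prems(1)] nochild by blast
      show "h (par y) < h y" using rtree_par[OF less.prems(1)] y by blast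
      show "h r < h y" using rtree_par[OF less.prems(1)] y by blast
    qed
    have xX: "x \<in> X" using x by blast
    have lt: "card X' < card X" unfolding X'_def by (rule card_Diff1_less[OF finX xX])
    have ih: "card (\<Union>X') \<le> card X' + 2"
      using less.hyps[OF lt rt'] less.prems(2,3) unfolding X'_def by blast
    have xr: "x \<noteq> r" using x by blast
    have pp: "par x \<in> X" "h (par x) < h x" using rtree_par[OF less.prems(1) xX xr] by auto
    have pX': "par x \<in> X'" using pp unfolding X'_def by auto
    have "x - \<Union>X' \<subseteq> x - par x" using pX' by blast
    moreover have cx: "card x = 3" "card (x \<inter> par x) = 2" using less.prems(2,3) x by auto
    moreover have fx: "finite x" using cx(1) card3_fin by blast
    ultimately have "card (x - \<Union>X') \<le> card (x - par x)" by (simp add: card_mono)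
    moreover have "card (x - par x) = 1"
    proof -
      have "x - par x = x - (x \<inter> par x)" by blast
      moreover have "finite (x \<inter> par x)" using fx by simp
      ultimately have "card (x - par x) = card x - card (x \<inter> par x)"
        using card_Diff_subset[of "x \<inter> par x" x] by simp
      then show ?thesis using cx by simp
    qed
    ultimately have c1: "card (x - \<Union>X') \<le> 1" by simp
    have "\<Union>X = (x - \<Union>X') \<union> \<Union>X'" unfolding X'_def using x by blast
    then have "card (\<Union>X) \<le> card (x - \<Union>X') + card (\<Union>X')" by (metis card_Un_le)
    moreover have "card X = card X' + 1" unfolding X'_def using card_Suc_Diff1[OF finX xX] by simp
    ultimately show ?thesis using c1 ih by linarith
  qed
qed

lemma L_le:
  assumes man: "simplicial_2_manifold F" and v: "v \<in> vertices F"
  shows "card (link_vertices F v) \<le> card {f\<in>F. v \<in> f} + 1"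
proof -
  let ?L = "link_vertices F v"
  let ?T = "{f\<in>F. v \<in> f}"
  have finF: "finite F" using man_fin[OF man] .
  have "?L \<subseteq> \<Union>F" unfolding link_vertices_def by blast
  moreover have "finite (\<Union>F)" using finF man_card[OF man] card3_fin by blast
  ultimately have finL: "finite ?L" by (rule finite_subset)
  obtain f where f: "f \<in> F" "v \<in> f" using v unfolding vertices_def by blast
  obtain a0 where a0: "a0 \<in> f" "a0 \<noteq> v" using other_vertex[OF man_card[OF man f(1)] f(2)] by blast
  have a0L: "a0 \<in> ?L" unfolding link_vertices_def using a0 f by blast
  have RL: "link_rel F v \<subseteq> ?L \<times> ?L"
  proof
    fix p assume p: "p \<in> link_rel F v"
    then obtain a b where ab: "p = (a, b)" "{v, a, b} \<in> F" "a \<noteq> v" "b \<noteq> v"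
      unfolding link_rel_def by blast
    have "a \<in> ?L" "b \<in> ?L" unfolding link_vertices_def using ab by blast+
    then show "p \<in> ?L \<times> ?L" using ab(1) by blast
  qed
  have conn: "\<forall>x\<in>?L. (a0, x) \<in> (link_rel F v)\<^sup>*" using man_link[OF man v a0L] by blast
  obtain par h where t: "rtree ?L a0 par h" "\<forall>x\<in>?L-{a0}. (par x, x) \<in> link_rel F v"
    using span_tree[OF finL a0L RL conn] by blast
  define psi where "psi = (\<lambda>x. {v, par x, x})"
  have into: "psi ` (?L - {a0}) \<subseteq> ?T"
  proof
    fix g assume "g \<in> psi ` (?L - {a0})"
    then obtain x where x: "x \<in> ?L - {a0}" "g = psi x" by blast
    have "{v, par x, x} \<in> F" using t(2) x(1) unfolding link_rel_def by blast
    then show "g \<in> ?T" using x(2) unfolding psi_def by blast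
  qed
  have inj: "inj_on psi (?L - {a0})"
  proof (rule inj_onI, rule ccontr)
    fix x y assume x: "x \<in> ?L - {a0}" and y: "y \<in> ?L - {a0}" and eq: "psi x = psi y" and ne: "x \<noteq> y"
    have xv: "x \<noteq> v" "y \<noteq> v" using x y unfolding link_vertices_def by blast+
    have "x \<in> psi y" using eq unfolding psi_def by blast
    then have y1: "x = par y" using xv ne unfolding psi_def by blast
    have "y \<in> psi x" using eq unfolding psi_def by blast
    then have x1: "y = par x" using xv ne unfolding psi_def by blast
    have xx: "x \<in> ?L" "x \<noteq> a0" "y \<in> ?L" "y \<noteq> a0" using x y by auto
    have hx: "h (par x) < h x" using rtree_par[OF t(1) xx(1,2)] by simp
    have hy: "h (par y) < h y" using rtree_par[OF t(1) xx(3,4)] by simp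
    have "h y < h x" using hx unfolding x1[symmetric] .
    moreover have "h x < h y" using hy unfolding y1[symmetric] .
    ultimately show False by simp
  qed
  have "card (?L - {a0}) \<le> card ?T"
    using card_inj_on_le[OF inj into] finF by simp
  moreover have "card (?L - {a0}) = card ?L - 1" using finL a0L by simp
  ultimately show ?thesis by linarith
qed

lemma bnd:
  assumes man: "simplicial_2_manifold F" and v: "v \<in> vertices F"
    and eq: "card (link_vertices F v) = card {f\<in>F. v \<in> f} + 1"
  shows "\<exists>e. boundary_edge F e \<and> v \<in> e"
proof (rule ccontr)
  assume nb: "\<not> ?thesis"
  let ?L = "link_vertices F v"
  let ?T = "{f\<in>F. v \<in> f}"
  have finF: "finite F" using man_fin[OF man] .
  have "?L \<subseteq> \<Union>F" unfolding link_vertices_def by blast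
  moreover have "finite (\<Union>F)" using finF man_card[OF man] card3_fin by blast
  ultimately have finL: "finite ?L" by (rule finite_subset)
  have finT: "finite ?T" using finF by simp
  have m2: "card {f\<in>?T. a \<in> f} = 2" if a: "a \<in> ?L" for a
  proof -
    obtain f where f: "f \<in> F" "v \<in> f" "a \<in> f" "a \<noteq> v" using a unfolding link_vertices_def by blast
    have ce: "card {v, a} = 2" using f(4) by simp
    have eE: "{v, a} \<in> edges F" using edge_in_edges[OF ce _ f(1)] f by blast
    have "{f\<in>?T. a \<in> f} = {f\<in>F. {v, a} \<subseteq> f}" by blast
    moreover have "card {f\<in>F. {v, a} \<subseteq> f} \<noteq> 1"
      using nb eE unfolding boundary_edge_def by blast
    moreover have "1 \<le> card {f\<in>F. {v, a} \<subseteq> f}" "card {f\<in>F. {v, a} \<subseteq> f} \<le> 2"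
      using m_bounds[OF man eE] by auto
    ultimately show ?thesis by simp
  qed
  have f2: "card {a\<in>?L. a \<in> f} = 2" if f: "f \<in> ?T" for f
  proof -
    have "{a\<in>?L. a \<in> f} = f - {v}" using f unfolding link_vertices_def by blast
    then show ?thesis using f man_card[OF man] by simp
  qed
  have "(\<Sum>a\<in>?L. card {f\<in>?T. a \<in> f}) = (\<Sum>f\<in>?T. card {a\<in>?L. a \<in> f})"
    by (rule dc[OF finL finT])
  moreover have "(\<Sum>a\<in>?L. card {f\<in>?T. a \<in> f}) = 2 * card ?L" using m2 by simp
  moreover have "(\<Sum>f\<in>?T. card {a\<in>?L. a \<in> f}) = 2 * card ?T" using f2 by simp
  ultimately show False using eq by simp
qed

lemma sum_plus1: "(\<Sum>v\<in>A. f v + (1::nat)) = sum f A + card A"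
  by (subst sum.distrib) simp

lemma tree_polygon:
  assumes man: "simplicial_2_manifold F" and con: "connected_complex F"
    and rt: "rtree F r par h"
    and adjeq: "\<forall>f\<in>F. \<forall>g\<in>F. adjacent_facets F f g \<longleftrightarrow> tadj r par f g"
    and chk: "tchk F r par col"
  shows "polygon_triangulation F \<and> checkered F"
proof -
  have finF: "finite F" using man_fin[OF man] .
  have Fne: "F \<noteq> {}" using man unfolding simplicial_2_manifold_def by blast
  have cF: "card F \<ge> 1" using finF Fne by (simp add: Suc_leI card_gt_0_iff)
  let ?V = "vertices F"
  let ?E = "edges F"
  have cI: "card {e\<in>?E. card {f\<in>F. e \<subseteq> f} = 2} = card F - 1" using I_card[OF man rt adjeq] .
  have cE: "card ?E = 2 * card F + 1" using sum_m[OF man] sum_m2[OF man] cI cF by simp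
  have sL: "(\<Sum>v\<in>?V. card (link_vertices F v)) = 4 * card F + 2" using sum_L[OF man] cE by simp
  have sT: "(\<Sum>v\<in>?V. card {f\<in>F. v \<in> f}) = 3 * card F" using sum_T[OF man] .
  have le: "\<forall>v\<in>?V. card (link_vertices F v) \<le> card {f\<in>F. v \<in> f} + 1" using L_le[OF man] by blast
  have "(\<Sum>v\<in>?V. card (link_vertices F v)) \<le> (\<Sum>v\<in>?V. card {f\<in>F. v \<in> f} + 1)"
    by (rule sum_mono) (use le in blast)
  also have "\<dots> = 3 * card F + card ?V" using sT sum_plus1 by metis
  finally have Vge: "card ?V \<ge> card F + 2" using sL by simp
  have pad: "\<forall>x\<in>F - {r}. card (x \<inter> par x) = 2"
  proof
    fix x assume x: "x \<in> F - {r}"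
    have xx: "x \<in> F" "x \<noteq> r" using x by auto
    have p: "par x \<in> F" using rtree_par[OF rt xx] by simp
    have "tadj r par x (par x)" using tadj_par[OF xx(2)] .
    then have "adjacent_facets F x (par x)" using adjeq xx p by simp
    then show "card (x \<inter> par x) = 2" unfolding adjacent_facets_def by blast
  qed
  have Vle: "card ?V \<le> card F + 2"
    using V_le[OF rt _ pad] man_card[OF man] unfolding vertices_def by blast
  have Veq: "card ?V = card F + 2" using Vge Vle by simp
  have chi: "int (card ?V) - int (card ?E) + int (card F) = 1" using Veq cE by simp
  have allb: "\<forall>v\<in>?V. \<exists>e. boundary_edge F e \<and> v \<in> e"
  proof
    fix v assume v: "v \<in> ?V"
    have "card (link_vertices F v) = card {f\<in>F. v \<in> f} + 1"
    proof (rule ccontr)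
      assume "card (link_vertices F v) \<noteq> card {f\<in>F. v \<in> f} + 1"
      then have lt: "card (link_vertices F v) < card {f\<in>F. v \<in> f} + 1" using le v by force
      have "(\<Sum>v\<in>?V. card (link_vertices F v)) < (\<Sum>v\<in>?V. card {f\<in>F. v \<in> f} + 1)"
        by (rule sum_strict_mono_ex1[OF man_fin_V[OF man]]) (use le v lt in blast)+
      also have "\<dots> = 3 * card F + card ?V" using sT sum_plus1 by metis
      finally show False using sL Veq by simp
    qed
    then show "\<exists>e. boundary_edge F e \<and> v \<in> e" using bnd[OF man v] by blast
  qed
  have poly: "polygon_triangulation F"
    unfolding polygon_triangulation_def using man con chi allb by blast
  have nbeq: "{g. adjacent_facets F f g} = tnb F r par f" if f: "f \<in> F" for f
    unfolding tnb_def using adjeq f unfolding adjacent_facets_def by auto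
  have "checkered F"
    unfolding checkered_def
  proof (rule exI[of _ col], intro conjI allI impI ballI)
    fix f g assume "adjacent_facets F f g"
    then have "f \<in> F" "g \<in> F" "tadj r par f g" using adjeq unfolding adjacent_facets_def by auto
    then show "col f \<noteq> col g" using chk unfolding tchk_def by blast
  next
    fix f assume f: "f \<in> F" "\<not> col f"
    then show "card {g. adjacent_facets F f g} = 3" using chk nbeq[OF f(1)] unfolding tchk_def by simp
  qed
  then show ?thesis using poly by blast
qed

theorem mainTheorem9:
  fixes F :: "'v set set"
  assumes "simplicial_2_manifold F"
    and "connected_complex F"
    and "\<not> (polygon_triangulation F \<and> checkered F)"
  shows "has_facet_cycle F"
proof -
  note man = assms(1)
  have dcon: "\<forall>f\<in>F. \<forall>g\<in>F. (f, g) \<in> {(x, y). adjacent_facets F x y}\<^sup>*" using dual_conn[OF man assms(2)] .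
  have finF: "finite F" using man_fin[OF man] .
  have Fne: "F \<noteq> {}" using man unfolding simplicial_2_manifold_def by blast
  have sym: "\<And>x y. adjacent_facets F x y \<Longrightarrow> adjacent_facets F y x"
    unfolding adjacent_facets_def by (auto simp add: Int_commute)
  have irr: "\<And>x. \<not> adjacent_facets F x x" unfolding adjacent_facets_def by simp
  have inX: "\<And>x y. adjacent_facets F x y \<Longrightarrow> x \<in> F" unfolding adjacent_facets_def by simp
  have deg: "\<forall>x\<in>F. card {y. adjacent_facets F x y} \<le> 3" using dual_deg[OF man] by blast
  from GL[OF finF Fne sym irr inX dcon deg]
  show ?thesis
  proof
    assume "good (adjacent_facets F) F"
    then show ?thesis using good_fc[OF man dcon] by blast
  next
    assume "\<exists>r par h col. rtree F r par h \<and> (\<forall>x\<in>F. \<forall>y\<in>F. adjacent_facets F x y \<longleftrightarrow> tadj r par x y)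
            \<and> tchk F r par col"
    then obtain r par h col where "rtree F r par h" "\<forall>x\<in>F. \<forall>y\<in>F. adjacent_facets F x y \<longleftrightarrow> tadj r par x y"
      "tchk F r par col" by blast
    then have "polygon_triangulation F \<and> checkered F" using tree_polygon[OF man assms(2)] by blast
    then show ?thesis using assms(3) by blast
  qed
qed

end
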